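(* Let $q$ be a prime power, $n \le m$, and let $\mathcal G(n,k)$ be a Gabidulin code of length $n$ and dimension $k$ over $\mathbb F_{q^m}$ with minimum rank distance $d = n-k+1$. Let $\tau < d$. Then for every $\mathbf r \in \mathbb F_{q^m}^n$, and hence for $\ell = \max_{\mathbf r \in \mathbb F_{q^m}^n} |\mathcal B_\tau(\mathbf r) \cap \mathcal G(n,k)|$, $$\ell \le \sum_{t = \lfloor (d-1)/2\rfloor + 1}^{\tau} \frac{\left[\begin{smallmatrix} n \\ 2t+1-d\end{smallmatrix}\right]_q}{\left[\begin{smallmatrix} t \\ 2t+1-d\end{smallmatrix}\right]_q} \le 4 \sum_{t = \lfloor (d-1)/2\rfloor + 1}^{\tau} q^{(2t-d+1)(n-t)} \le 4\left(\tau - \left\lfloor \tfrac{d-1}{2}\right\rfloor\right) q^{(2\tau - d+1)(n - \lfloor (d-1)/2\rfloor - 1)}.$$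
   Context: A linearized polynomial over $\mathbb F_{q^m}$ is $f(x) = \sum_{i} f_i x^{q^i}$ with $f_i \in \mathbb F_{q^m}$; its $q$-degree is the largest $i$ with $f_i \neq 0$. The Gabidulin code $\mathcal G(n,k)$ is $\{(f(\alpha_0), \dots, f(\alpha_{n-1})) : \deg_q f < k\}$ for fixed $\alpha_0,\dots,\alpha_{n-1} \in \mathbb F_{q^m}$ linearly independent over $\mathbb F_q$. Fixing a basis of $\mathbb F_{q^m}$ over $\mathbb F_q$, each $\mathbf x \in \mathbb F_{q^m}^n$ corresponds to a matrix in $\mathbb F_q^{m\times n}$, and $\mathrm{rank}(\mathbf x)$ is its $\mathbb F_q$-rank. Its minimum rank distance is $d=n-k+1$. $\mathcal B_\tau(\mathbf r)$ is the set of $\mathbf x \in \mathbb F_{q^m}^n$ with $\mathrm{rank}(\mathbf x - \mathbf r) \le \tau$. The Gaussian binomial is $\left[\begin{smallmatrix} n \\ s\end{smallmatrix}\right]_q = \prod_{i=0}^{s-1}\frac{q^n-q^i}{q^s-q^i}$. *)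

theory Defs
  imports Complex_Main "HOL-Computational_Algebra.Primes"
begin

text \<open>The field F_{q^m} is a finite field type 'a with CARD('a) = q^m; the subfield
  F_q is the set of elements fixed by the Frobenius x \<mapsto> x^q.\<close>
definition subfield_q :: "nat \<Rightarrow> ('a::field) set" where
  "subfield_q q = {x. x ^ q = x}"

definition q_indep :: "nat \<Rightarrow> ('a::field) list \<Rightarrow> nat set \<Rightarrow> bool" where
  "q_indep q v S \<longleftrightarrow> (\<forall>c. (\<forall>i\<in>S. c i \<in> subfield_q q) \<longrightarrow>
      (\<Sum>i\<in>S. c i * v ! i) = 0 \<longrightarrow> (\<forall>i\<in>S. c i = 0))"

text \<open>Rank of a vector: the F_q-rank of its m x n expansion matrix, i.e. the maximal
  number of F_q-linearly independent columns (= entries).\<close>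
definition rank_q :: "nat \<Rightarrow> ('a::field) list \<Rightarrow> nat" where
  "rank_q q v = Max {card S | S. S \<subseteq> {..<length v} \<and> q_indep q v S}"

definition lin_eval :: "nat \<Rightarrow> nat \<Rightarrow> (nat \<Rightarrow> 'a::field) \<Rightarrow> 'a \<Rightarrow> 'a" where
  "lin_eval q k c x = (\<Sum>i<k. c i * x ^ (q ^ i))"

definition gabidulin :: "nat \<Rightarrow> 'a list \<Rightarrow> nat \<Rightarrow> ('a::field) list set" where
  "gabidulin q alphas k = {map (lin_eval q k c) alphas | c. True}"

definition rank_ball :: "nat \<Rightarrow> nat \<Rightarrow> ('a::field) list \<Rightarrow> 'a list set" where
  "rank_ball q \<tau> r = {x. length x = length r \<and> rank_q q (map2 (-) x r) \<le> \<tau>}"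

definition gauss_binom :: "nat \<Rightarrow> nat \<Rightarrow> nat \<Rightarrow> real" where
  "gauss_binom q n s = (\<Prod>i<s. (real q ^ n - real q ^ i) / (real q ^ s - real q ^ i))"

end

theory Submission
  imports Defs "HOL-Number_Theory.Residues" "HOL-Computational_Algebra.Polynomial"
     "HOL-Library.Function_Algebras" "HOL-Library.Product_Plus"
begin

lemma fin_field_pow_card:
  fixes x :: "'a :: {field,finite}"
  shows "x ^ card (UNIV :: 'a set) = x"
proof (cases "x = 0")
  case False
  have "x * (\<Prod>y\<in>UNIV-{0}. x * y) = x * x ^ (card (UNIV :: 'a set) - 1) * \<Prod>(UNIV-{0})"
    by (simp add: prod.distrib mult_ac)
  also have "x * x ^ (card (UNIV :: 'a set) - 1) = x ^ Suc (card (UNIV :: 'a set) - 1)"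
    by (subst power_Suc) auto
  also have "Suc (card (UNIV :: 'a set) - 1) = card (UNIV :: 'a set)"
    using finite_UNIV_card_ge_0[where ?'a = 'a] by simp
  also have "(\<Prod>y\<in>UNIV-{0}. x * y) = (\<Prod>y\<in>UNIV-{0}. y)"
    by (rule prod.reindex_bij_witness[of _ "\<lambda>y. y / x" "\<lambda>y. x * y"]) (use False in auto)
  finally show ?thesis
    by simp
qed (use finite_UNIV_card_ge_0[where ?'a = 'a] in auto)

locale gset =
  fixes p e q m :: nat and K :: "'a::{field,finite} set"
  assumes p_prime: "prime p" and e_pos: "e > 0" and q_def: "q = p ^ e"
    and cardU: "card (UNIV :: 'a set) = q ^ m"
    and K_def: "K = subfield_q q"
begin

lemma q_ge2: "q \<ge> 2"
proof -
  have "p \<ge> 2" using p_prime prime_ge_2_nat by blast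
  hence "p ^ 1 \<le> p ^ e" using e_pos by (intro power_increasing) auto
  thus ?thesis using \<open>p \<ge> 2\<close> q_def by simp
qed

lemma CHAR_eq: "CHAR('a) = p"
proof -
  have pos: "CHAR('a) > 0" by (rule finite_imp_CHAR_pos) simp
  have pr: "prime CHAR('a)" using prime_CHAR_semidom[OF pos] .
  have "CHAR('a) dvd p ^ (e * m)" using CHAR_dvd_CARD[where 'a='a] cardU q_def
    by (simp add: power_mult)
  hence "CHAR('a) dvd p" using pr prime_dvd_power by blast
  thus ?thesis using pr p_prime primes_dvd_imp_eq by blast
qed

lemma prime_CHAR: "prime CHAR('a)" using CHAR_eq p_prime by simp

lemma frob_add: "((x::'a) + y) ^ (q ^ l) = x ^ (q ^ l) + y ^ (q ^ l)"
  by (rule freshmans_dream'[OF prime_CHAR, where n="e*l"]) (simp add: CHAR_eq q_def power_mult)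

lemma frob_sum: "(sum (f :: 'b \<Rightarrow> 'a) A) ^ (q ^ l) = (\<Sum>i\<in>A. f i ^ (q ^ l))"
  by (rule freshmans_dream_sum'[OF prime_CHAR, where n="e*l"]) (simp add: CHAR_eq q_def power_mult)

lemma m_pos: "m > 0"
proof (rule ccontr)
  assume "\<not> m > 0"
  hence "card (UNIV :: 'a set) = 1" using cardU by simp
  then obtain a where "(UNIV :: 'a set) = {a}" using card_1_singletonE by blast
  hence "(0::'a) = 1" by (metis UNIV_I singletonD)
  thus False by simp
qed

lemma K_zero[simp]: "0 \<in> K" using q_ge2 by (simp add: K_def subfield_q_def)
lemma K_one[simp]: "1 \<in> K" by (simp add: K_def subfield_q_def)
lemma K_add: "a \<in> K \<Longrightarrow> b \<in> K \<Longrightarrow> a + b \<in> K"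
  using frob_add[of a b 1] by (simp add: K_def subfield_q_def)
lemma K_neg: "a \<in> K \<Longrightarrow> - a \<in> K"
proof -
  assume "a \<in> K"
  have "(-a + a) ^ q = (-a) ^ q + a ^ q" using frob_add[of "-a" a 1] by simp
  moreover have "(0::'a) ^ q = 0" using q_ge2 by (simp add: power_0_left)
  ultimately have "(-a)^q + a^q = 0" by simp
  hence "(-a)^q = - (a^q)" by (simp add: eq_neg_iff_add_eq_0)
  thus ?thesis using \<open>a \<in> K\<close> by (simp add: K_def subfield_q_def)
qed
lemma K_mul: "a \<in> K \<Longrightarrow> b \<in> K \<Longrightarrow> a * b \<in> K"
  by (simp add: K_def subfield_q_def power_mult_distrib)
lemma K_inv: "a \<in> K \<Longrightarrow> inverse a \<in> K"
  by (simp add: K_def subfield_q_def power_inverse)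
lemma K_diff: "a \<in> K \<Longrightarrow> b \<in> K \<Longrightarrow> a - b \<in> K"
  using K_add K_neg by (metis diff_conv_add_uminus)
lemma K_div: "a \<in> K \<Longrightarrow> b \<in> K \<Longrightarrow> a / b \<in> K"
  using K_mul K_inv by (metis divide_inverse)
lemma K_pow: "a \<in> K \<Longrightarrow> a ^ (q ^ l) = a"
  by (induction l) (auto simp: K_def subfield_q_def power_mult power_Suc2 simp del: power_Suc)

lemma card_K_le: "card K \<le> q"
proof -
  define P :: "'a poly" where "P = monom 1 q + (- monom 1 1)"
  have dP: "degree P = q" using q_ge2 unfolding P_def by (subst degree_add_eq_left) (auto simp: degree_monom_eq)
  hence "P \<noteq> 0" using q_ge2 by auto
  have "K = {x. poly P x = 0}" using q_ge2 by (auto simp: P_def poly_monom K_def subfield_q_def)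
  thus ?thesis using card_poly_roots_bound[OF \<open>P\<noteq>0\<close>] dP by simp
qed

lemma geom_nat: "(q - 1) * (\<Sum>i<m. q ^ i) = q ^ m - 1"
proof -
  have "int q ^ m - 1 = (int q - 1) * (\<Sum>i<m. int q ^ i)" by (rule power_diff_1_eq)
  moreover have "q ^ m \<ge> 1" using q_ge2 by simp
  ultimately have "int (q ^ m - 1) = int ((q - 1) * (\<Sum>i<m. q ^ i))" using q_ge2
    by (simp add: of_nat_diff)
  thus ?thesis by linarith
qed

lemma card_K_ge: "card K \<ge> q"
proof -
  define N where "N = (\<Sum>i<m. q ^ i)"
  have N1: "N \<ge> 1"
  proof -
    have "q ^ 0 \<le> N" unfolding N_def using m_pos by (intro member_le_sum) auto
    thus ?thesis by simp
  qed
  have qN: "(q - 1) * N = q ^ m - 1" unfolding N_def by (rule geom_nat)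
  have qm: "q ^ m \<ge> q" using power_increasing[of 1 m q] m_pos q_ge2 by simp
  define g :: "'a poly" where "g = (\<Sum>j<N. monom 1 ((q-1)*j))"
  have pg: "poly g x = (\<Sum>j<N. (x^(q-1))^j)" for x
    by (simp add: g_def poly_sum poly_monom power_mult)
  have ident: "x ^ (q^m) - x = (x^q - x) * poly g x" for x :: 'a
  proof -
    have "(x^(q-1) - 1) * (\<Sum>j<N. (x^(q-1))^j) = (x^(q-1))^N - 1"
      by (simp add: power_diff_1_eq)
    also have "(x^(q-1))^N = x ^ (q^m - 1)" by (simp only: qN flip: power_mult)
    finally have h: "(x^(q-1) - 1) * poly g x = x ^ (q^m - 1) - 1" by (simp add: pg)
    have "x^q = x * x^(q-1)" using q_ge2 power_Suc[of x "q-1"] by simp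
    hence "(x^q - x) * poly g x = x * ((x^(q-1) - 1) * poly g x)" by (simp add: algebra_simps)
    also have "\<dots> = x * (x^(q^m - 1) - 1)" by (simp only: h)
    also have "\<dots> = x * x^(q^m - 1) - x" by (simp add: algebra_simps)
    also have "x * x^(q^m - 1) = x^(q^m)" using qm q_ge2 power_Suc[of x "q^m-1"] by simp
    finally show ?thesis by simp
  qed
  have g0: "poly g 0 = 1"
  proof -
    obtain N' where "N = Suc N'" using N1 by (cases N) auto
    thus ?thesis using q_ge2 by (simp add: pg sum.lessThan_Suc_shift power_0_left)
  qed
  hence gnz: "g \<noteq> 0" by auto
  have dg: "degree g \<le> (q-1)*(N-1)" unfolding g_def
  proof (rule degree_sum_le)
    fix j assume "j \<in> {..<N}"
    hence "(q-1)*j \<le> (q-1)*(N-1)" by (intro mult_le_mono2) auto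
    thus "degree (monom (1::'a) ((q-1)*j)) \<le> (q-1)*(N-1)" using degree_monom_le order.trans by blast
  qed auto
  have "(q-1)*(N-1) = q^m - q" using qN q_ge2 N1 by (simp add: algebra_simps diff_mult_distrib2)
  hence cg: "card {x. poly g x = 0} \<le> q^m - q" using card_poly_roots_bound[OF gnz] dg by simp
  have "UNIV \<subseteq> K \<union> {x. poly g x = 0}"
  proof
    fix x :: 'a
    have "x ^ (q^m) = x" using fin_field_pow_card[of x] cardU by simp
    hence "(x^q - x) * poly g x = 0" using ident[of x] by simp
    thus "x \<in> K \<union> {x. poly g x = 0}" by (auto simp: K_def subfield_q_def)
  qed
  hence "card (UNIV::'a set) \<le> card (K \<union> {x. poly g x = 0})" by (intro card_mono) auto
  also have "\<dots> \<le> card K + card {x. poly g x = 0}" by (rule card_Un_le)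
  finally show ?thesis using cg cardU qm by linarith
qed

lemma card_K: "card K = q" using card_K_le card_K_ge by simp
lemma finite_K: "finite K" by simp

end

locale kspace =
  fixes K :: "'a::field set" and q :: nat and sc :: "'a \<Rightarrow> 'v::ab_group_add \<Rightarrow> 'v"
  assumes K0: "0 \<in> K" and K1: "1 \<in> K"
    and Kadd: "a \<in> K \<Longrightarrow> b \<in> K \<Longrightarrow> a + b \<in> K"
    and Kneg: "a \<in> K \<Longrightarrow> - a \<in> K"
    and Kmul: "a \<in> K \<Longrightarrow> b \<in> K \<Longrightarrow> a * b \<in> K"
    and Kinv: "a \<in> K \<Longrightarrow> inverse a \<in> K"
    and finK: "finite K" and cardK: "card K = q"
    and sc_add_r: "sc a (x + y) = sc a x + sc a y"
    and sc_add_l: "sc (a + b) x = sc a x + sc b x"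
    and sc_mul: "sc (a * b) x = sc a (sc b x)"
    and sc_one: "sc 1 x = x"
begin

lemma sc_zero_l[simp]: "sc 0 x = 0"
  using sc_add_l[of 0 0 x] by simp
lemma sc_zero_r[simp]: "sc a 0 = 0"
  using sc_add_r[of a 0 0] by simp
lemma sc_neg_r: "sc a (- x) = - sc a x"
  using sc_add_r[of a x "-x"] by (simp add: eq_neg_iff_add_eq_0 add.commute)
lemma sc_diff_r: "sc a (x - y) = sc a x - sc a y"
  using sc_add_r[of a x "-y"] sc_neg_r by simp
lemma sc_neg_l: "sc (- a) x = - sc a x"
  using sc_add_l[of a "-a" x] by (simp add: eq_neg_iff_add_eq_0 add.commute)
lemma sc_diff_l: "sc (a - b) x = sc a x - sc b x"
  using sc_add_l[of a "-b" x] sc_neg_l by simp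
lemma sc_sum_r: "sc a (sum f A) = (\<Sum>i\<in>A. sc a (f i))"
  by (induction A rule: infinite_finite_induct) (auto simp: sc_add_r)
lemma sc_sum_l: "sc (sum f A) x = (\<Sum>i\<in>A. sc (f i) x)"
  by (induction A rule: infinite_finite_induct) (auto simp: sc_add_l)
lemma Kdiff: "a \<in> K \<Longrightarrow> b \<in> K \<Longrightarrow> a - b \<in> K"
  using Kadd Kneg by (metis diff_conv_add_uminus)
lemma Kdiv: "a \<in> K \<Longrightarrow> b \<in> K \<Longrightarrow> a / b \<in> K"
  using Kmul Kinv by (metis divide_inverse)
lemma Ksum: "(\<And>i. i \<in> A \<Longrightarrow> f i \<in> K) \<Longrightarrow> sum f A \<in> K"
  by (induction A rule: infinite_finite_induct) (auto simp: K0 Kadd)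

definition spanS :: "(nat \<Rightarrow> 'v) \<Rightarrow> nat set \<Rightarrow> 'v set" where
  "spanS g S = {\<Sum>i\<in>S. sc (c i) (g i) | c. \<forall>i\<in>S. c i \<in> K}"

definition indepS :: "(nat \<Rightarrow> 'v) \<Rightarrow> nat set \<Rightarrow> bool" where
  "indepS g S \<longleftrightarrow> (\<forall>c. (\<forall>i\<in>S. c i \<in> K) \<longrightarrow> (\<Sum>i\<in>S. sc (c i) (g i)) = 0 \<longrightarrow> (\<forall>i\<in>S. c i = 0))"

definition subsp :: "'v set \<Rightarrow> bool" where
  "subsp V \<longleftrightarrow> 0 \<in> V \<and> (\<forall>x\<in>V. \<forall>y\<in>V. x + y \<in> V) \<and> (\<forall>a\<in>K. \<forall>x\<in>V. sc a x \<in> V)"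

lemma subsp_0: "subsp V \<Longrightarrow> 0 \<in> V" by (simp add: subsp_def)
lemma subsp_add: "subsp V \<Longrightarrow> x \<in> V \<Longrightarrow> y \<in> V \<Longrightarrow> x + y \<in> V" by (simp add: subsp_def)
lemma subsp_sc: "subsp V \<Longrightarrow> a \<in> K \<Longrightarrow> x \<in> V \<Longrightarrow> sc a x \<in> V" by (simp add: subsp_def)
lemma subsp_neg: "subsp V \<Longrightarrow> x \<in> V \<Longrightarrow> - x \<in> V"
  using subsp_sc[of V "-1" x] K1 Kneg sc_neg_l sc_one by auto
lemma subsp_diff: "subsp V \<Longrightarrow> x \<in> V \<Longrightarrow> y \<in> V \<Longrightarrow> x - y \<in> V"
  using subsp_add subsp_neg by (metis diff_conv_add_uminus)
lemma subsp_sum: "subsp V \<Longrightarrow> (\<And>i. i \<in> A \<Longrightarrow> f i \<in> V) \<Longrightarrow> sum f A \<in> V"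
  by (induction A rule: infinite_finite_induct) (auto simp: subsp_0 subsp_add)

lemma span_cong: "(\<And>i. i \<in> S \<Longrightarrow> g i = h i) \<Longrightarrow> spanS g S = spanS h S"
proof -
  assume "\<And>i. i \<in> S \<Longrightarrow> g i = h i"
  hence "\<And>c. (\<Sum>i\<in>S. sc (c i) (g i)) = (\<Sum>i\<in>S. sc (c i) (h i))" by (intro sum.cong) auto
  thus ?thesis unfolding spanS_def by simp
qed
lemma indep_cong: "(\<And>i. i \<in> S \<Longrightarrow> g i = h i) \<Longrightarrow> indepS g S = indepS h S"
proof -
  assume "\<And>i. i \<in> S \<Longrightarrow> g i = h i"
  hence "\<And>c. (\<Sum>i\<in>S. sc (c i) (g i)) = (\<Sum>i\<in>S. sc (c i) (h i))" by (intro sum.cong) auto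
  thus ?thesis unfolding indepS_def by simp
qed

lemma span_empty[simp]: "spanS g {} = {0}"
  unfolding spanS_def by auto

lemma span_insert:
  assumes "finite S" "i \<notin> S"
  shows "spanS g (insert i S) = {sc a (g i) + y | a y. a \<in> K \<and> y \<in> spanS g S}"
proof (intro equalityI subsetI)
  fix x assume "x \<in> spanS g (insert i S)"
  then obtain c where c: "\<forall>j\<in>insert i S. c j \<in> K" "x = (\<Sum>j\<in>insert i S. sc (c j) (g j))"
    unfolding spanS_def by blast
  hence "x = sc (c i) (g i) + (\<Sum>j\<in>S. sc (c j) (g j))" using assms by simp
  moreover have "(\<Sum>j\<in>S. sc (c j) (g j)) \<in> spanS g S" using c unfolding spanS_def by auto
  ultimately show "x \<in> {sc a (g i) + y | a y. a \<in> K \<and> y \<in> spanS g S}" using c by auto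
next
  fix x assume "x \<in> {sc a (g i) + y | a y. a \<in> K \<and> y \<in> spanS g S}"
  then obtain a c where ac: "a \<in> K" "\<forall>j\<in>S. c j \<in> K" "x = sc a (g i) + (\<Sum>j\<in>S. sc (c j) (g j))"
    unfolding spanS_def by blast
  define c' where "c' = c(i := a)"
  have "(\<Sum>j\<in>S. sc (c' j) (g j)) = (\<Sum>j\<in>S. sc (c j) (g j))"
    using assms by (intro sum.cong) (auto simp: c'_def)
  hence "x = (\<Sum>j\<in>insert i S. sc (c' j) (g j))" using ac assms by (simp add: c'_def)
  moreover have "\<forall>j\<in>insert i S. c' j \<in> K" using ac by (auto simp: c'_def)
  ultimately show "x \<in> spanS g (insert i S)" unfolding spanS_def by blast
qed

lemma finite_span: "finite S \<Longrightarrow> finite (spanS g S)"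
proof (induction S rule: finite_induct)
  case (insert i S)
  have "spanS g (insert i S) = (\<lambda>(a,y). sc a (g i) + y) ` (K \<times> spanS g S)"
    using span_insert[OF insert(1,2)] by auto
  thus ?case using insert finK by simp
qed simp

lemma subsp_span: "subsp (spanS g S)"
proof -
  have "0 \<in> spanS g S" unfolding spanS_def using K0 by (auto intro!: exI[of _ "\<lambda>_. 0"])
  moreover have "x + y \<in> spanS g S" if hxy: "x \<in> spanS g S" "y \<in> spanS g S" for x y
  proof -
    obtain c1 c2 where "\<forall>i\<in>S. c1 i \<in> K" "x = (\<Sum>i\<in>S. sc (c1 i) (g i))"
       "\<forall>i\<in>S. c2 i \<in> K" "y = (\<Sum>i\<in>S. sc (c2 i) (g i))" using hxy unfolding spanS_def by blast
    thus ?thesis unfolding spanS_def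
      by (auto intro!: exI[of _ "\<lambda>i. c1 i + c2 i"] simp: Kadd sc_add_l sum.distrib)
  qed
  moreover have "sc a x \<in> spanS g S" if hax: "a \<in> K" "x \<in> spanS g S" for a x
  proof -
    obtain c where "\<forall>i\<in>S. c i \<in> K" "x = (\<Sum>i\<in>S. sc (c i) (g i))" using hax unfolding spanS_def by blast
    thus ?thesis unfolding spanS_def using hax
      by (auto intro!: exI[of _ "\<lambda>i. a * c i"] simp: Kmul sc_mul sc_sum_r)
  qed
  ultimately show ?thesis unfolding subsp_def by blast
qed

lemma span_sub: "subsp V \<Longrightarrow> (\<And>i. i \<in> S \<Longrightarrow> g i \<in> V) \<Longrightarrow> spanS g S \<subseteq> V"
  unfolding spanS_def by (auto intro!: subsp_sum subsp_sc)

lemma in_span: assumes "finite S" "i \<in> S" shows "g i \<in> spanS g S"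
proof -
  have "(\<Sum>j\<in>S. sc (if j = i then 1 else 0) (g j)) = (\<Sum>j\<in>S. if j = i then g i else 0)"
    by (intro sum.cong) (auto simp: sc_one)
  also have "\<dots> = g i" using assms by simp
  finally show ?thesis unfolding spanS_def using K0 K1
    by (auto intro!: exI[of _ "\<lambda>j. if j = i then 1 else 0"])
qed

lemma span_mono: "finite T \<Longrightarrow> S \<subseteq> T \<Longrightarrow> spanS g S \<subseteq> spanS g T"
  by (rule span_sub[OF subsp_span]) (auto intro: in_span)

lemma indep_insert:
  assumes "finite S" "i \<notin> S"
  shows "indepS g (insert i S) \<longleftrightarrow> indepS g S \<and> g i \<notin> spanS g S"
proof
  assume ind: "indepS g (insert i S)"
  have "indepS g S" unfolding indepS_def
  proof (intro allI impI)
    fix c assume c: "\<forall>j\<in>S. c j \<in> K" "(\<Sum>j\<in>S. sc (c j) (g j)) = 0"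
    define c' where "c' = c(i := 0)"
    have "(\<Sum>j\<in>S. sc (c' j) (g j)) = (\<Sum>j\<in>S. sc (c j) (g j))"
      using assms by (intro sum.cong) (auto simp: c'_def)
    hence "(\<Sum>j\<in>insert i S. sc (c' j) (g j)) = 0" using assms c by (simp add: c'_def)
    moreover have "\<forall>j\<in>insert i S. c' j \<in> K" using c K0 by (auto simp: c'_def)
    ultimately have "\<forall>j\<in>insert i S. c' j = 0" using ind unfolding indepS_def by blast
    thus "\<forall>j\<in>S. c j = 0" using assms by (auto simp: c'_def split: if_splits)
  qed
  moreover have "g i \<notin> spanS g S"
  proof
    assume "g i \<in> spanS g S"
    then obtain c where c: "\<forall>j\<in>S. c j \<in> K" "g i = (\<Sum>j\<in>S. sc (c j) (g j))" unfolding spanS_def by blast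
    define c' where "c' = c(i := -1)"
    have "(\<Sum>j\<in>S. sc (c' j) (g j)) = (\<Sum>j\<in>S. sc (c j) (g j))"
      using assms by (intro sum.cong) (auto simp: c'_def)
    hence "(\<Sum>j\<in>insert i S. sc (c' j) (g j)) = 0" using assms c
      by (simp add: c'_def sc_neg_l sc_one)
    moreover have "\<forall>j\<in>insert i S. c' j \<in> K" using c K1 Kneg by (auto simp: c'_def)
    ultimately have "c' i = 0" using ind unfolding indepS_def by blast
    thus False by (simp add: c'_def)
  qed
  ultimately show "indepS g S \<and> g i \<notin> spanS g S" by blast
next
  assume h: "indepS g S \<and> g i \<notin> spanS g S"
  show "indepS g (insert i S)" unfolding indepS_def
  proof (intro allI impI)
    fix c assume c: "\<forall>j\<in>insert i S. c j \<in> K" "(\<Sum>j\<in>insert i S. sc (c j) (g j)) = 0"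
    hence eq: "sc (c i) (g i) + (\<Sum>j\<in>S. sc (c j) (g j)) = 0" using assms by simp
    have ci: "c i = 0"
    proof (rule ccontr)
      assume nz: "c i \<noteq> 0"
      have "g i = sc (inverse (c i)) (sc (c i) (g i))" using nz by (simp flip: sc_mul add: sc_one)
      also have "sc (c i) (g i) = - (\<Sum>j\<in>S. sc (c j) (g j))" using eq by (simp add: eq_neg_iff_add_eq_0)
      also have "sc (inverse (c i)) (- (\<Sum>j\<in>S. sc (c j) (g j))) = (\<Sum>j\<in>S. sc (- inverse (c i) * c j) (g j))"
        by (simp add: sc_neg_r sc_sum_r sc_mul sc_neg_l sum_negf)
      finally have "g i \<in> spanS g S" unfolding spanS_def using c Kmul Kneg Kinv
        by (auto intro!: exI[of _ "\<lambda>j. - inverse (c i) * c j"])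
      thus False using h by blast
    qed
    hence "(\<Sum>j\<in>S. sc (c j) (g j)) = 0" using eq by simp
    hence "\<forall>j\<in>S. c j = 0" using h c unfolding indepS_def by blast
    thus "\<forall>j\<in>insert i S. c j = 0" using ci by blast
  qed
qed

lemma card_span: "finite S \<Longrightarrow> indepS g S \<Longrightarrow> card (spanS g S) = q ^ card S"
proof (induction S rule: finite_induct)
  case empty thus ?case by simp
next
  case (insert i S)
  have ind: "indepS g S" and gi: "g i \<notin> spanS g S" using insert indep_insert by blast+
  have eq: "spanS g (insert i S) = (\<lambda>(a,y). sc a (g i) + y) ` (K \<times> spanS g S)"
    using span_insert[OF insert(1,2)] by auto
  have inj: "inj_on (\<lambda>(a,y). sc a (g i) + y) (K \<times> spanS g S)"
  proof (rule inj_onI, clarify)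
    fix a y b y' assume ab: "a \<in> K" "y \<in> spanS g S" "b \<in> K" "y' \<in> spanS g S"
      "sc a (g i) + y = sc b (g i) + y'"
    have "a = b"
    proof (rule ccontr)
      assume "a \<noteq> b"
      have "sc (a - b) (g i) = y' - y" using ab(5) by (simp add: sc_diff_l algebra_simps)
      hence "sc (inverse (a - b)) (sc (a - b) (g i)) = sc (inverse (a - b)) (y' - y)" by simp
      hence "g i = sc (inverse (a - b)) (y' - y)" using \<open>a \<noteq> b\<close>
        by (simp flip: sc_mul add: sc_one)
      moreover have "sc (inverse (a - b)) (y' - y) \<in> spanS g S"
        using ab subsp_span by (intro subsp_sc subsp_diff Kinv Kdiff) auto
      ultimately show False using gi by simp
    qed
    thus "a = b \<and> y = y'" using ab(5) by simp
  qed
  have "card (spanS g (insert i S)) = card (K \<times> spanS g S)" using eq card_image[OF inj] by simp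
  also have "\<dots> = q * q ^ card S" using insert ind cardK by (simp add: card_cartesian_product)
  finally show ?case using insert by simp
qed

lemma span_eq_of:
  assumes "finite T" "S \<subseteq> T" "\<And>j. j \<in> T \<Longrightarrow> g j \<in> spanS g S"
  shows "spanS g T = spanS g S"
proof
  show "spanS g T \<subseteq> spanS g S" by (rule span_sub[OF subsp_span]) (rule assms(3))
  show "spanS g S \<subseteq> spanS g T" by (rule span_mono[OF assms(1,2)])
qed

lemma max_indep:
  assumes "finite T"
  shows "\<exists>S\<subseteq>T. indepS g S \<and> spanS g S = spanS g T \<and> card S = Max {card S | S. S \<subseteq> T \<and> indepS g S}"
proof -
  let ?M = "{card S | S. S \<subseteq> T \<and> indepS g S}"
  have "?M \<subseteq> card ` Pow T" by auto
  hence fin: "finite ?M" using assms finite_subset by blast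
  have "indepS g {}" by (simp add: indepS_def)
  hence "card {} \<in> ?M" by (intro CollectI exI[of _ "{}"]) simp
  hence "0 \<in> ?M" by simp
  hence "Max ?M \<in> ?M" using fin Max_in by blast
  hence "\<exists>S. Max ?M = card S \<and> S \<subseteq> T \<and> indepS g S" by (simp only: mem_Collect_eq)
  then obtain S where S: "S \<subseteq> T" "indepS g S" "card S = Max ?M" by metis
  have finS: "finite S" using S assms finite_subset by blast
  have "g j \<in> spanS g S" if "j \<in> T" for j
  proof (rule ccontr)
    assume nj: "g j \<notin> spanS g S"
    hence "j \<notin> S" using in_span[OF finS] by blast
    hence "indepS g (insert j S)" using indep_insert[OF finS] nj S by blast
    moreover have "insert j S \<subseteq> T" using S that by blast
    ultimately have "card (insert j S) \<in> ?M" by (intro CollectI exI[of _ "insert j S"]) simp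
    hence "card (insert j S) \<le> Max ?M" using fin by simp
    thus False using \<open>j \<notin> S\<close> finS S by simp
  qed
  hence "spanS g S = spanS g T" using span_eq_of[OF assms S(1)] by simp
  thus ?thesis using S by blast
qed

lemma card_span_Max:
  "finite T \<Longrightarrow> card (spanS g T) = q ^ Max {card S | S. S \<subseteq> T \<and> indepS g S}"
proof -
  assume fT: "finite T"
  obtain S where "S \<subseteq> T" "indepS g S" "spanS g S = spanS g T" "card S = Max {card S | S. S \<subseteq> T \<and> indepS g S}"
    using max_indep[OF fT, of g] by blast
  thus ?thesis using card_span[of S g] finite_subset[OF _ fT] by simp
qed


definition IT :: "'v set \<Rightarrow> nat \<Rightarrow> 'v list set" where
  "IT V s = {ws. length ws = s \<and> set ws \<subseteq> V \<and> indepS (nth ws) {..<s}}"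

lemma IT_snoc_eq:
  "IT V (Suc s) = {ws @ [x] | ws x. ws \<in> IT V s \<and> x \<in> V - spanS (nth ws) {..<s}}"
proof (intro equalityI subsetI)
  fix ws' assume h: "ws' \<in> IT V (Suc s)"
  hence len: "length ws' = Suc s" "set ws' \<subseteq> V" "indepS (nth ws') {..<Suc s}" by (auto simp: IT_def)
  define ws where "ws = butlast ws'"
  define x where "x = last ws'"
  have eq: "ws' = ws @ [x]" using len(1) unfolding ws_def x_def
    by (metis append_butlast_last_id list.size(3) nat.distinct(1))
  have lws: "length ws = s" using eq len(1) by simp
  have nth_eq: "\<And>i. i \<in> {..<s} \<Longrightarrow> ws' ! i = ws ! i" using eq lws by (simp add: nth_append)
  have "indepS (nth ws') (insert s {..<s})" using len(3) by (simp add: lessThan_Suc)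
  hence "indepS (nth ws') {..<s} \<and> ws' ! s \<notin> spanS (nth ws') {..<s}"
    using indep_insert[of "{..<s}" s "nth ws'"] by simp
  moreover have "ws' ! s = x" using eq lws by (metis nth_append_length)
  moreover have "indepS (nth ws') {..<s} = indepS (nth ws) {..<s}" by (rule indep_cong) (simp add: nth_eq)
  moreover have "spanS (nth ws') {..<s} = spanS (nth ws) {..<s}" by (rule span_cong) (simp add: nth_eq)
  ultimately have "indepS (nth ws) {..<s}" "x \<notin> spanS (nth ws) {..<s}" by auto
  moreover have "set ws \<subseteq> V" "x \<in> V" using len(2) eq by auto
  ultimately show "ws' \<in> {ws @ [x] | ws x. ws \<in> IT V s \<and> x \<in> V - spanS (nth ws) {..<s}}"
    using eq lws unfolding IT_def by blast
next
  fix ws' assume "ws' \<in> {ws @ [x] | ws x. ws \<in> IT V s \<and> x \<in> V - spanS (nth ws) {..<s}}"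
  then obtain ws x where h: "ws' = ws @ [x]" "length ws = s" "set ws \<subseteq> V" "indepS (nth ws) {..<s}"
    "x \<in> V" "x \<notin> spanS (nth ws) {..<s}" unfolding IT_def by blast
  have nth_eq: "\<And>i. i \<in> {..<s} \<Longrightarrow> ws' ! i = ws ! i" using h by (simp add: nth_append)
  have "indepS (nth ws') {..<s} = indepS (nth ws) {..<s}" by (rule indep_cong) (simp add: nth_eq)
  moreover have "spanS (nth ws') {..<s} = spanS (nth ws) {..<s}" by (rule span_cong) (simp add: nth_eq)
  moreover have "ws' ! s = x" using h by (metis nth_append_length)
  ultimately have "indepS (nth ws') {..<s}" "ws' ! s \<notin> spanS (nth ws') {..<s}" using h by auto
  hence "indepS (nth ws') (insert s {..<s})" using indep_insert[of "{..<s}" s "nth ws'"] by simp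
  hence "indepS (nth ws') {..<Suc s}" by (simp add: lessThan_Suc)
  thus "ws' \<in> IT V (Suc s)" using h unfolding IT_def by auto
qed

lemma finite_IT: "finite V \<Longrightarrow> finite (IT V s)"
proof -
  assume "finite V"
  hence "finite {xs. set xs \<subseteq> V \<and> length xs = s}" by (rule finite_lists_length_eq)
  moreover have "IT V s \<subseteq> {xs. set xs \<subseteq> V \<and> length xs = s}" by (auto simp: IT_def)
  ultimately show ?thesis using finite_subset by blast
qed

lemma card_snoc:
  assumes W: "subsp W" "finite W" and T: "T \<subseteq> IT W s"
  shows "card {ws @ [x] | ws x. ws \<in> T \<and> x \<in> W - spanS (nth ws) {..<s}} = card T * (card W - q ^ s)"
proof -
  have finT: "finite T" using finite_IT[OF W(2)] T finite_subset by blast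
  have eq: "{ws @ [x] | ws x. ws \<in> T \<and> x \<in> W - spanS (nth ws) {..<s}}
      = (\<lambda>(ws,x). ws @ [x]) ` (SIGMA ws:T. W - spanS (nth ws) {..<s})" by auto
  have inj: "inj_on (\<lambda>(ws,x). ws @ [x]) (SIGMA ws:T. W - spanS (nth ws) {..<s})"
    by (rule inj_onI) auto
  have cB: "card (W - spanS (nth ws) {..<s}) = card W - q ^ s" if "ws \<in> T" for ws
  proof -
    have "indepS (nth ws) {..<s}" using that T by (auto simp: IT_def)
    hence c: "card (spanS (nth ws) {..<s}) = q ^ s" using card_span by simp
    have ws: "set ws \<subseteq> W" "length ws = s" using that T by (auto simp: IT_def)
    have "spanS (nth ws) {..<s} \<subseteq> W" using W(1)
    proof (rule span_sub)
      fix i assume "i \<in> {..<s}"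
      thus "ws ! i \<in> W" using ws nth_mem by force
    qed
    thus ?thesis using c card_Diff_subset[OF finite_span[of "{..<s}" "nth ws"]] by simp
  qed
  have "card (SIGMA ws:T. W - spanS (nth ws) {..<s}) = (\<Sum>ws\<in>T. card (W - spanS (nth ws) {..<s}))"
    using finT W(2) by (intro card_SigmaI) auto
  also have "\<dots> = (\<Sum>ws\<in>T. card W - q ^ s)" using cB by (intro sum.cong) auto
  also have "\<dots> = card T * (card W - q ^ s)" by simp
  finally show ?thesis using eq card_image[OF inj] by simp
qed

lemma card_IT: assumes "subsp V" "finite V" shows "card (IT V s) = (\<Prod>i<s. card V - q ^ i)"
proof (induction s)
  case 0
  have "IT V 0 = {[]}" by (auto simp: IT_def indepS_def)
  thus ?case by simp
next
  case (Suc s)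
  have "card (IT V (Suc s)) = card (IT V s) * (card V - q ^ s)"
    unfolding IT_snoc_eq by (rule card_snoc[OF assms]) simp
  thus ?case using Suc by simp
qed

lemma IT_mono: "V \<subseteq> W \<Longrightarrow> IT V s \<subseteq> IT W s"
  by (auto simp: IT_def)

end

lemma card_hom:
  fixes L :: "'v::ab_group_add \<Rightarrow> 'w::ab_group_add"
  assumes A: "finite A" "0 \<in> A" "\<And>x y. x \<in> A \<Longrightarrow> y \<in> A \<Longrightarrow> x + y \<in> A" "\<And>x. x \<in> A \<Longrightarrow> - x \<in> A"
    and L: "\<And>x y. x \<in> A \<Longrightarrow> y \<in> A \<Longrightarrow> L (x + y) = L x + L y"
  shows "card A = card {x\<in>A. L x = 0} * card (L ` A)"
proof -
  have L0: "L 0 = 0" using L[of 0 0] A(2) by simp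
  have Lneg: "L (- x) = - L x" if "x \<in> A" for x
    using L[of x "-x"] that A(4) L0 by (simp add: eq_neg_iff_add_eq_0 add.commute)
  let ?F = "\<lambda>y. {x\<in>A. L x = y}"
  have cF: "card (?F y) = card {x\<in>A. L x = 0}" if hy: "y \<in> L ` A" for y
  proof -
    obtain a where a: "a \<in> A" "y = L a" using hy by blast
    have "?F y = (\<lambda>z. a + z) ` {x\<in>A. L x = 0}"
    proof (intro equalityI subsetI)
      fix x assume "x \<in> ?F y"
      hence x: "x \<in> A" "L x = L a" using a by auto
      have "- a + x \<in> A" using x a A by blast
      moreover have "L (- a + x) = 0" using L[of "-a" x] x a A Lneg by simp
      moreover have "x = a + (- a + x)" by simp
      ultimately show "x \<in> (\<lambda>z. a + z) ` {x\<in>A. L x = 0}" by blast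
    next
      fix x assume "x \<in> (\<lambda>z. a + z) ` {x\<in>A. L x = 0}"
      then obtain z where "z \<in> A" "L z = 0" "x = a + z" by blast
      thus "x \<in> ?F y" using a A L by auto
    qed
    moreover have "inj_on (\<lambda>z. a + z) {x\<in>A. L x = 0}" by (rule inj_onI) simp
    ultimately show ?thesis by (simp add: card_image)
  qed
  have "A = (\<Union>y\<in>L ` A. ?F y)" by auto
  moreover have "card (\<Union>y\<in>L ` A. ?F y) = (\<Sum>y\<in>L ` A. card (?F y))"
    using A(1) by (intro card_UN_disjoint) auto
  ultimately have "card A = (\<Sum>y\<in>L ` A. card (?F y))" by simp
  also have "\<dots> = (\<Sum>y\<in>L ` A. card {x\<in>A. L x = 0})" using cF by (intro sum.cong) auto
  finally show ?thesis by simp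
qed


sublocale gset \<subseteq> fk: kspace K q "(*) :: 'a \<Rightarrow> 'a \<Rightarrow> 'a"
  by unfold_locales (auto simp: K_add K_neg K_mul K_inv card_K algebra_simps)

sublocale gset \<subseteq> fv: kspace K q "\<lambda>a (w::nat \<Rightarrow> 'a) i. a * w i"
  by unfold_locales (auto simp: K_add K_neg K_mul K_inv card_K algebra_simps fun_eq_iff)

context gset
begin

definition KV :: "nat \<Rightarrow> (nat \<Rightarrow> 'a) set" where
  "KV n = {w. (\<forall>i<n. w i \<in> K) \<and> (\<forall>i\<ge>n. w i = 0)}"

lemma KV_subsp: "fv.subsp (KV n)"
  unfolding fv.subsp_def KV_def by (auto simp: K_add K_mul)

lemma KV_add: "x \<in> KV n \<Longrightarrow> y \<in> KV n \<Longrightarrow> x + y \<in> KV n"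
  by (auto simp: KV_def K_add)
lemma KV_neg: "x \<in> KV n \<Longrightarrow> - x \<in> KV n"
  by (auto simp: KV_def K_neg)
lemma KV_zero: "0 \<in> KV n"
  by (auto simp: KV_def)

lemma KV_bij: "bij_betw (\<lambda>w. restrict w {..<n}) (KV n) (PiE {..<n} (\<lambda>_. K))"
proof (rule bij_betwI[where g = "\<lambda>c i. if i < n then c i else 0"])
  show "(\<lambda>w. restrict w {..<n}) \<in> KV n \<rightarrow> PiE {..<n} (\<lambda>_. K)"
  proof
    fix w assume "w \<in> KV n"
    thus "restrict w {..<n} \<in> PiE {..<n} (\<lambda>_. K)" unfolding KV_def by (intro restrict_PiE_iff[THEN iffD2]) simp
  qed
  show "(\<lambda>c i. if i < n then c i else 0) \<in> PiE {..<n} (\<lambda>_. K) \<rightarrow> KV n"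
  proof
    fix c assume c: "c \<in> PiE {..<n} (\<lambda>_. K)"
    have "\<forall>i<n. c i \<in> K" using c by (simp add: PiE_iff)
    thus "(\<lambda>i. if i < n then c i else 0) \<in> KV n" unfolding KV_def by simp
  qed
  show "(\<lambda>i. if i < n then restrict w {..<n} i else 0) = w" if "w \<in> KV n" for w
  proof
    fix i show "(if i < n then restrict w {..<n} i else 0) = w i" using that by (simp add: KV_def)
  qed
  show "restrict (\<lambda>i. if i < n then c i else 0) {..<n} = c" if "c \<in> PiE {..<n} (\<lambda>_. K)" for c
  proof
    fix i show "restrict (\<lambda>i. if i < n then c i else 0) {..<n} i = c i"
      using that PiE_arb[of c "{..<n}" "\<lambda>_. K" i] by simp
  qed
qed

lemma card_KV: "card (KV n) = q ^ n"
proof -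
  have "card (KV n) = card (PiE {..<n} (\<lambda>_. K :: 'a set))" by (rule bij_betw_same_card[OF KV_bij])
  also have "\<dots> = q ^ n" by (simp add: card_PiE card_K)
  finally show ?thesis .
qed

lemma finite_KV: "finite (KV n)"
proof -
  have "finite (PiE {..<n} (\<lambda>_. K :: 'a set))" by (rule finite_PiE) auto
  thus ?thesis using bij_betw_finite[OF KV_bij] by simp
qed

definition spanL :: "'a list \<Rightarrow> 'a set" where
  "spanL v = fk.spanS (nth v) {..<length v}"

lemma q_indep_eq: "q_indep q v S = fk.indepS (nth v) S"
  unfolding q_indep_def fk.indepS_def by (simp add: K_def)

lemma card_spanL: "card (spanL v) = q ^ rank_q q v"
  unfolding spanL_def rank_q_def q_indep_eq by (rule fk.card_span_Max) simp

lemma rank_eq_iff: "rank_q q v = t \<longleftrightarrow> card (spanL v) = q ^ t"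
  using card_spanL q_ge2 by (simp add: power_inject_exp)

lemma rank_le_iff: "rank_q q v \<le> t \<longleftrightarrow> card (spanL v) \<le> q ^ t"
  using card_spanL q_ge2 by (simp add: power_increasing_iff)

definition lin :: "'a set \<Rightarrow> ('a \<Rightarrow> 'a) \<Rightarrow> bool" where
  "lin S \<phi> \<longleftrightarrow> (\<forall>x\<in>S. \<phi> x \<in> K) \<and> (\<forall>x\<in>S. \<forall>y\<in>S. \<phi> (x + y) = \<phi> x + \<phi> y)
     \<and> (\<forall>a\<in>K. \<forall>x\<in>S. \<phi> (a * x) = a * \<phi> x)"

lemma lin_K: "lin S \<phi> \<Longrightarrow> x \<in> S \<Longrightarrow> \<phi> x \<in> K" by (simp add: lin_def)
lemma lin_add: "lin S \<phi> \<Longrightarrow> x \<in> S \<Longrightarrow> y \<in> S \<Longrightarrow> \<phi> (x + y) = \<phi> x + \<phi> y" by (simp add: lin_def)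
lemma lin_sc: "lin S \<phi> \<Longrightarrow> a \<in> K \<Longrightarrow> x \<in> S \<Longrightarrow> \<phi> (a * x) = a * \<phi> x" by (simp add: lin_def)
lemma lin_0: "lin S \<phi> \<Longrightarrow> fk.subsp S \<Longrightarrow> \<phi> 0 = 0"
  using lin_sc[of S \<phi> 0 0] fk.subsp_0 by simp
lemma lin_diff: "lin S \<phi> \<Longrightarrow> fk.subsp S \<Longrightarrow> x \<in> S \<Longrightarrow> y \<in> S \<Longrightarrow> \<phi> (x - y) = \<phi> x - \<phi> y"
proof -
  assume h: "lin S \<phi>" "fk.subsp S" "x \<in> S" "y \<in> S"
  have "x - y \<in> S" using h fk.subsp_diff by blast
  hence "\<phi> (y + (x - y)) = \<phi> y + \<phi> (x - y)" using h lin_add by blast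
  thus ?thesis by simp
qed
lemma lin_sum: "lin S \<phi> \<Longrightarrow> fk.subsp S \<Longrightarrow> (\<And>i. i \<in> A \<Longrightarrow> c i \<in> K) \<Longrightarrow> (\<And>i. i \<in> A \<Longrightarrow> g i \<in> S)
   \<Longrightarrow> \<phi> (\<Sum>i\<in>A. c i * g i) = (\<Sum>i\<in>A. c i * \<phi> (g i))"
proof (induction A rule: infinite_finite_induct)
  case (infinite A) thus ?case using lin_0 by simp
next
  case empty thus ?case using lin_0 by simp
next
  case (insert i A)
  have "(\<Sum>j\<in>A. c j * g j) \<in> S" using insert by (intro fk.subsp_sum fk.subsp_sc) auto
  moreover have "c i * g i \<in> S" using insert by (intro fk.subsp_sc) auto
  ultimately have "\<phi> (c i * g i + (\<Sum>j\<in>A. c j * g j)) = \<phi> (c i * g i) + \<phi> (\<Sum>j\<in>A. c j * g j)"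
    using insert(4) by (intro lin_add) auto
  moreover have "(\<Sum>j\<in>insert i A. c j * g j) = c i * g i + (\<Sum>j\<in>A. c j * g j)"
    using insert(1,2) by simp
  ultimately have "\<phi> (\<Sum>j\<in>insert i A. c j * g j) = \<phi> (c i * g i) + \<phi> (\<Sum>j\<in>A. c j * g j)"
    by simp
  also have "\<phi> (c i * g i) = c i * \<phi> (g i)" using insert lin_sc by simp
  also have "\<phi> (\<Sum>j\<in>A. c j * g j) = (\<Sum>j\<in>A. c j * \<phi> (g j))" using insert by simp
  finally show ?case using insert by simp
qed

end

context gset
begin

definition RowS :: "'a list \<Rightarrow> (nat \<Rightarrow> 'a) set" where
  "RowS v = {w \<in> KV (length v). \<exists>\<phi>. lin (spanL v) \<phi> \<and> (\<forall>i<length v. w i = \<phi> (v ! i))}"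

lemma RowS_sub: "RowS v \<subseteq> KV (length v)" by (auto simp: RowS_def)

lemma spanL_subsp: "fk.subsp (spanL v)" unfolding spanL_def by (rule fk.subsp_span)

lemma e_in_spanL: "i < length v \<Longrightarrow> v ! i \<in> spanL v"
  unfolding spanL_def by (rule fk.in_span) auto

lemma RowS_subsp: "fv.subsp (RowS v)"
proof -
  let ?S = "spanL v"
  have "0 \<in> RowS v"
  proof -
    have "lin ?S (\<lambda>_. 0)" by (simp add: lin_def)
    thus ?thesis unfolding RowS_def using KV_zero by auto
  qed
  moreover have "x + y \<in> RowS v" if hx: "x \<in> RowS v" and hy: "y \<in> RowS v" for x y
  proof -
    obtain \<phi>1 where p1: "lin ?S \<phi>1" "\<forall>i<length v. x i = \<phi>1 (v ! i)" "x \<in> KV (length v)"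
      using hx by (auto simp: RowS_def)
    obtain \<phi>2 where p2: "lin ?S \<phi>2" "\<forall>i<length v. y i = \<phi>2 (v ! i)" "y \<in> KV (length v)"
      using hy by (auto simp: RowS_def)
    have "lin ?S (\<lambda>z. \<phi>1 z + \<phi>2 z)"
      using p1(1) p2(1) unfolding lin_def by (auto simp: K_add algebra_simps)
    moreover have "\<forall>i<length v. (x + y) i = \<phi>1 (v ! i) + \<phi>2 (v ! i)" using p1 p2 by simp
    moreover have "x + y \<in> KV (length v)" using p1 p2 KV_add by blast
    ultimately show ?thesis unfolding RowS_def by blast
  qed
  moreover have "(\<lambda>i. a * x i) \<in> RowS v" if ha: "a \<in> K" and hx: "x \<in> RowS v" for a x
  proof -
    obtain \<phi> where p: "lin ?S \<phi>" "\<forall>i<length v. x i = \<phi> (v ! i)" "x \<in> KV (length v)"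
      using hx by (auto simp: RowS_def)
    have "lin ?S (\<lambda>z. a * \<phi> z)"
      using p(1) ha unfolding lin_def by (auto simp: K_mul algebra_simps)
    moreover have "(\<lambda>i. a * x i) \<in> KV (length v)" using p(3) ha by (auto simp: KV_def K_mul)
    ultimately show ?thesis unfolding RowS_def using p(2) by auto
  qed
  ultimately show ?thesis unfolding fv.subsp_def by blast
qed

lemma finite_RowS: "finite (RowS v)"
  using RowS_sub finite_KV finite_subset by blast

definition coord :: "nat set \<Rightarrow> (nat \<Rightarrow> 'a) \<Rightarrow> 'a \<Rightarrow> nat \<Rightarrow> 'a" where
  "coord B g x = (SOME c. (\<forall>i\<in>B. c i \<in> K) \<and> x = (\<Sum>i\<in>B. c i * g i))"

lemma coord: assumes "x \<in> fk.spanS g B"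
  shows "(\<forall>i\<in>B. coord B g x i \<in> K) \<and> x = (\<Sum>i\<in>B. coord B g x i * g i)"
proof -
  have "\<exists>c. (\<forall>i\<in>B. c i \<in> K) \<and> x = (\<Sum>i\<in>B. c i * g i)" using assms unfolding fk.spanS_def by blast
  thus ?thesis unfolding coord_def by (rule someI_ex)
qed

lemma coord_unique:
  assumes "fk.indepS g B" "\<forall>i\<in>B. c i \<in> K" "\<forall>i\<in>B. c' i \<in> K"
    "(\<Sum>i\<in>B. c i * g i) = (\<Sum>i\<in>B. c' i * g i)" "i \<in> B"
  shows "c i = c' i"
proof -
  have "(\<Sum>i\<in>B. (c i - c' i) * g i) = 0" using assms(4)
    by (simp add: left_diff_distrib sum_subtractf)
  moreover have "\<forall>i\<in>B. c i - c' i \<in> K" using assms K_diff by blast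
  moreover have "(\<forall>i\<in>B. (\<lambda>j. c j - c' j) i \<in> K) \<longrightarrow> (\<Sum>i\<in>B. (\<lambda>j. c j - c' j) i * g i) = 0
      \<longrightarrow> (\<forall>i\<in>B. (\<lambda>j. c j - c' j) i = 0)"
    using assms(1) unfolding fk.indepS_def by (rule spec)
  ultimately have "\<forall>i\<in>B. c i - c' i = 0" by simp
  thus ?thesis using assms(5) by simp
qed

lemma coord_eq:
  assumes "fk.indepS g B" "\<forall>i\<in>B. c i \<in> K" "x = (\<Sum>i\<in>B. c i * g i)" "i \<in> B"
  shows "coord B g x i = c i"
proof -
  have "x \<in> fk.spanS g B" using assms unfolding fk.spanS_def by blast
  from coord[OF this] have h: "\<forall>i\<in>B. coord B g x i \<in> K" "x = (\<Sum>i\<in>B. coord B g x i * g i)" by auto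
  have eq: "(\<Sum>i\<in>B. coord B g x i * g i) = (\<Sum>i\<in>B. c i * g i)" using h(2) assms(3) by simp
  show ?thesis by (rule coord_unique[OF assms(1) h(1) assms(2) eq assms(4)])
qed

lemma card_RowS: "q ^ rank_q q v \<le> card (RowS v)"
proof -
  let ?n = "length v" and ?S = "spanL v" and ?g = "nth v"
  obtain B where B: "B \<subseteq> {..<?n}" "fk.indepS ?g B" "fk.spanS ?g B = ?S"
      "card B = Max {card S | S. S \<subseteq> {..<?n} \<and> fk.indepS ?g S}"
    using fk.max_indep[of "{..<?n}" ?g] unfolding spanL_def by auto
  have cB: "card B = rank_q q v" using B(4) unfolding rank_q_def q_indep_eq by simp
  have finB: "finite B" using B(1) finite_subset by blast
  define \<phi> where "\<phi> a x = (\<Sum>i\<in>B. a i * coord B ?g x i)" for a x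
  define W where "W a = (\<lambda>i. if i < ?n then \<phi> a (v ! i) else 0)" for a
  have co: "\<forall>i\<in>B. coord B ?g x i \<in> K" "x = (\<Sum>i\<in>B. coord B ?g x i * ?g i)" if "x \<in> ?S" for x
    using coord[of x ?g B] that B(3) by auto
  have co_add: "coord B ?g (x + y) i = coord B ?g x i + coord B ?g y i" if "x \<in> ?S" "y \<in> ?S" "i \<in> B" for x y i
  proof (rule coord_eq[OF B(2)])
    show "\<forall>i\<in>B. coord B ?g x i + coord B ?g y i \<in> K" using co that K_add by blast
    show "x + y = (\<Sum>i\<in>B. (coord B ?g x i + coord B ?g y i) * ?g i)"
      using co[OF that(1)] co[OF that(2)] by (simp add: distrib_right sum.distrib)
  qed fact
  have co_sc: "coord B ?g (b * x) i = b * coord B ?g x i" if "b \<in> K" "x \<in> ?S" "i \<in> B" for b x i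
  proof (rule coord_eq[OF B(2)])
    show "\<forall>i\<in>B. b * coord B ?g x i \<in> K" using co that K_mul by blast
    have "b * x = b * (\<Sum>i\<in>B. coord B ?g x i * ?g i)" using co(2)[OF that(2)] by (rule arg_cong)
    also have "\<dots> = (\<Sum>i\<in>B. (b * coord B ?g x i) * ?g i)" by (simp add: sum_distrib_left mult.assoc)
    finally show "b * x = (\<Sum>i\<in>B. (b * coord B ?g x i) * ?g i)" .
  qed fact
  have co_basis: "coord B ?g (v ! j) i = (if i = j then 1 else 0)" if "j \<in> B" "i \<in> B" for i j
  proof (rule coord_eq[OF B(2)])
    show "\<forall>i\<in>B. (if i = j then 1 else 0) \<in> K" by simp
    have "(\<Sum>i\<in>B. (if i = j then 1 else 0) * ?g i) = (\<Sum>i\<in>B. if i = j then v ! j else 0)"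
      by (rule sum.cong) auto
    also have "\<dots> = v ! j" using that finB by simp
    finally show "v ! j = (\<Sum>i\<in>B. (if i = j then 1 else 0) * ?g i)" by simp
  qed fact
  have lin_phi: "lin ?S (\<phi> a)" if "a \<in> PiE B (\<lambda>_. K)" for a
  proof -
    have aK: "\<forall>i\<in>B. a i \<in> K" using that by (simp add: PiE_iff)
    have "\<phi> a x \<in> K" if "x \<in> ?S" for x
      unfolding \<phi>_def using aK co[OF that] by (intro fk.Ksum) (auto intro: K_mul)
    moreover have "\<phi> a (x + y) = \<phi> a x + \<phi> a y" if "x \<in> ?S" "y \<in> ?S" for x y
      unfolding \<phi>_def using co_add[OF that] by (simp add: distrib_left sum.distrib)
    moreover have "\<phi> a (b * x) = b * \<phi> a x" if "b \<in> K" "x \<in> ?S" for b x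
      unfolding \<phi>_def using co_sc[OF that] by (simp add: sum_distrib_left algebra_simps)
    ultimately show ?thesis unfolding lin_def by blast
  qed
  have W_in: "W a \<in> RowS v" if "a \<in> PiE B (\<lambda>_. K)" for a
  proof -
    have "W a \<in> KV ?n" unfolding KV_def W_def using lin_K[OF lin_phi[OF that]] e_in_spanL by auto
    moreover have "\<forall>i<?n. W a i = \<phi> a (v ! i)" by (simp add: W_def)
    ultimately show ?thesis unfolding RowS_def using lin_phi[OF that] by blast
  qed
  have W_B: "W a j = a j" if "j \<in> B" for a j
  proof -
    have "j < ?n" using that B(1) by auto
    hence "W a j = (\<Sum>i\<in>B. a i * (if i = j then 1 else 0))"
      unfolding W_def \<phi>_def using co_basis[OF that] by simp
    also have "\<dots> = (\<Sum>i\<in>B. if i = j then a j else 0)" by (rule sum.cong) auto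
    also have "\<dots> = a j" using finB that by simp
    finally show ?thesis .
  qed
  have inj: "inj_on W (PiE B (\<lambda>_. K))"
  proof (rule inj_onI)
    fix a a' assume h: "a \<in> PiE B (\<lambda>_. K)" "a' \<in> PiE B (\<lambda>_. K)" "W a = W a'"
    show "a = a'" by (rule PiE_ext[OF h(1,2)]) (metis W_B h(3))
  qed
  have "card (PiE B (\<lambda>_. K)) \<le> card (RowS v)"
    by (rule card_inj_on_le[OF inj]) (use W_in finite_RowS in auto)
  moreover have "card (PiE B (\<lambda>_. K)) = q ^ card B" using finB by (simp add: card_PiE card_K)
  ultimately show ?thesis using cB by simp
qed

end

lemma sum_fun_apply: "(sum (f :: 'b \<Rightarrow> 'c \<Rightarrow> 'd::comm_monoid_add) A) i = (\<Sum>a\<in>A. f a i)"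
  by (induction A rule: infinite_finite_induct) auto

context gset
begin

lemma lemD:
  assumes S: "fk.subsp S"
  shows "(\<forall>l<j. lin S (\<phi> l)) \<Longrightarrow>
    (\<forall>c. (\<forall>l<j. c l \<in> K) \<longrightarrow> (\<forall>x\<in>S. (\<Sum>l<j. c l * \<phi> l x) = 0) \<longrightarrow> (\<forall>l<j. c l = 0)) \<Longrightarrow>
    (\<forall>y\<in>KV j. \<exists>x\<in>S. \<forall>l<j. \<phi> l x = y l)"
proof (induction j)
  case 0
  thus ?case using fk.subsp_0[OF S] by blast
next
  case (Suc j)
  have linj: "\<forall>l<j. lin S (\<phi> l)" and lj: "lin S (\<phi> j)" using Suc.prems(1) by auto
  have indj: "\<forall>c. (\<forall>l<j. c l \<in> K) \<longrightarrow> (\<forall>x\<in>S. (\<Sum>l<j. c l * \<phi> l x) = 0) \<longrightarrow> (\<forall>l<j. c l = 0)"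
  proof (intro allI impI)
    fix c l assume c: "\<forall>l<j. c l \<in> K" "\<forall>x\<in>S. (\<Sum>l<j. c l * \<phi> l x) = 0" and lj': "l < j"
    define c' where "c' = c(j := 0)"
    have "(\<forall>l<Suc j. c' l \<in> K) \<longrightarrow> (\<forall>x\<in>S. (\<Sum>l<Suc j. c' l * \<phi> l x) = 0) \<longrightarrow> (\<forall>l<Suc j. c' l = 0)"
      using Suc.prems(2) by (rule spec)
    moreover have "\<forall>l<Suc j. c' l \<in> K" using c by (auto simp: c'_def less_Suc_eq)
    moreover have "(\<Sum>l<Suc j. c' l * \<phi> l x) = (\<Sum>l<j. c l * \<phi> l x)" for x
      by (simp add: c'_def)
    ultimately have "\<forall>l<Suc j. c' l = 0" using c by simp
    hence "c' l = 0" using lj' by simp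
    thus "c l = 0" using lj' by (simp add: c'_def)
  qed
  have IH: "\<forall>y\<in>KV j. \<exists>x\<in>S. \<forall>l<j. \<phi> l x = y l" using Suc.IH linj indj by blast
  show ?case
  proof (cases "\<exists>z\<in>S. (\<forall>l<j. \<phi> l z = 0) \<and> \<phi> j z \<noteq> 0")
    case True
    then obtain z where z: "z \<in> S" "\<forall>l<j. \<phi> l z = 0" "\<phi> j z \<noteq> 0" by blast
    show ?thesis
    proof
      fix y assume y: "y \<in> KV (Suc j)"
      have "y(j := 0) \<in> KV j" using y unfolding KV_def by auto
      then obtain x where x: "x \<in> S" "\<forall>l<j. \<phi> l x = (y(j := 0)) l" using IH by blast
      define a where "a = (y j - \<phi> j x) / \<phi> j z"
      have yj: "y j \<in> K" using y by (simp add: KV_def)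
      have aK: "a \<in> K" unfolding a_def using yj lin_K[OF lj x(1)] lin_K[OF lj z(1)] K_diff K_div by blast
      have azS: "a * z \<in> S" using fk.subsp_sc[OF S aK z(1)] .
      have x'S: "x + a * z \<in> S" using fk.subsp_add[OF S x(1) azS] .
      have "\<phi> l (x + a * z) = y l" if "l < Suc j" for l
      proof -
        have ll: "lin S (\<phi> l)" using Suc.prems(1) that by blast
        have "\<phi> l (x + a * z) = \<phi> l x + a * \<phi> l z" using lin_add[OF ll x(1) azS] lin_sc[OF ll aK z(1)] by simp
        moreover
        { assume "l < j" hence "\<phi> l x + a * \<phi> l z = y l" using x z by simp }
        moreover
        { assume "l = j" hence "\<phi> l x + a * \<phi> l z = y l" using z(3) by (simp add: a_def) }
        ultimately show ?thesis using that by (auto simp: less_Suc_eq)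
      qed
      thus "\<exists>x\<in>S. \<forall>l<Suc j. \<phi> l x = y l" using x'S by blast
    qed
  next
    case False
    have "\<forall>l. \<exists>x. l < j \<longrightarrow> x \<in> S \<and> (\<forall>m<j. \<phi> m x = (if m = l then 1 else 0))"
    proof
      fix l
      show "\<exists>x. l < j \<longrightarrow> x \<in> S \<and> (\<forall>m<j. \<phi> m x = (if m = l then 1 else 0))"
      proof (cases "l < j")
        case True
        have "(\<lambda>m. if m = l then 1 else 0) \<in> KV j" using True by (auto simp: KV_def)
        from bspec[OF IH this] obtain x where "x \<in> S" "\<forall>m<j. \<phi> m x = (\<lambda>m. if m = l then (1::'a) else 0) m"
          by blast
        thus ?thesis by auto
      next
        case False thus ?thesis by simp
      qed
    qed
    hence "\<exists>xs. \<forall>l. l < j \<longrightarrow> xs l \<in> S \<and> (\<forall>m<j. \<phi> m (xs l) = (if m = l then 1 else 0))"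
      by (rule choice)
    then obtain xs where xs0: "\<forall>l. l < j \<longrightarrow> xs l \<in> S \<and> (\<forall>m<j. \<phi> m (xs l) = (if m = l then 1 else 0))"
      by blast
    have xs: "\<And>l. l < j \<Longrightarrow> xs l \<in> S" "\<And>l m. l < j \<Longrightarrow> m < j \<Longrightarrow> \<phi> m (xs l) = (if m = l then 1 else 0)"
      using xs0 by auto
    define c where "c l = (if l < j then - \<phi> j (xs l) else 1)" for l
    have cK: "\<forall>l<Suc j. c l \<in> K" unfolding c_def using lin_K[OF lj] xs(1) K_neg by auto
    have csum: "\<forall>x\<in>S. (\<Sum>l<Suc j. c l * \<phi> l x) = 0"
    proof
      fix x assume x: "x \<in> S"
      define x' where "x' = (\<Sum>l<j. \<phi> l x * xs l)"
      have phK: "\<phi> l x \<in> K" if "l < j" for l using lin_K linj that x by blast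
      have x'S: "x' \<in> S" unfolding x'_def using phK xs(1) S by (intro fk.subsp_sum fk.subsp_sc[OF S]) auto
      have phx': "\<phi> m x' = (\<Sum>l<j. \<phi> l x * \<phi> m (xs l))" if "lin S (\<phi> m)" for m
        unfolding x'_def using lin_sum[OF that S, of "{..<j}" "\<lambda>l. \<phi> l x" xs] phK xs(1) by auto
      have "\<phi> m x' = \<phi> m x" if "m < j" for m
      proof -
        have "\<phi> m x' = (\<Sum>l<j. \<phi> l x * (if m = l then 1 else 0))"
          using phx'[of m] linj that xs(2)[of _ m] by simp
        also have "\<dots> = (\<Sum>l<j. if l = m then \<phi> m x else 0)" by (rule sum.cong) auto
        also have "\<dots> = \<phi> m x" using that by simp
        finally show ?thesis .
      qed
      hence "\<forall>l<j. \<phi> l (x - x') = 0"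
      proof (intro allI impI)
        fix l assume hl: "\<And>m. m < j \<Longrightarrow> \<phi> m x' = \<phi> m x" and l: "l < j"
        have "\<phi> l (x - x') = \<phi> l x - \<phi> l x'" using lin_diff[OF _ S x x'S] linj l by blast
        thus "\<phi> l (x - x') = 0" using hl[OF l] by simp
      qed
      moreover have "x - x' \<in> S" using fk.subsp_diff[OF S x x'S] .
      ultimately have "\<phi> j (x - x') = 0" using False by blast
      hence "\<phi> j x = \<phi> j x'" using lin_diff[OF lj S x x'S] by simp
      hence hj: "\<phi> j x = (\<Sum>l<j. \<phi> l x * \<phi> j (xs l))" using phx'[OF lj] by simp
      have "(\<Sum>l<Suc j. c l * \<phi> l x) = (\<Sum>l<j. - \<phi> j (xs l) * \<phi> l x) + \<phi> j x"
        by (simp add: c_def)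
      also have "\<dots> = 0" using hj by (simp add: sum_negf mult.commute)
      finally show "(\<Sum>l<Suc j. c l * \<phi> l x) = 0" .
    qed
    have "(\<forall>l<Suc j. c l \<in> K) \<longrightarrow> (\<forall>x\<in>S. (\<Sum>l<Suc j. c l * \<phi> l x) = 0) \<longrightarrow> (\<forall>l<Suc j. c l = 0)"
      using Suc.prems(2) by (rule spec)
    hence "c j = 0" using cK csum by blast
    thus ?thesis by (simp add: c_def)
  qed
qed

end

context gset
begin

lemma lemG:
  assumes len: "length v1 = n" "length v2 = n" "length ws = j"
    and ws: "set ws \<subseteq> RowS v1 \<inter> RowS v2" "fv.indepS (nth ws) {..<j}"
  shows "card (fk.spanS (\<lambda>i. v1!i - v2!i) {..<n}) * q ^ j \<le> card (spanL v1) * card (spanL v2)"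
proof -
  define S1 where "S1 = spanL v1"
  define S2 where "S2 = spanL v2"
  have S1s: "fk.subsp S1" and S2s: "fk.subsp S2" unfolding S1_def S2_def by (rule spanL_subsp)+
  have finS1: "finite S1" and finS2: "finite S2" unfolding S1_def S2_def spanL_def by (rule fk.finite_span, simp)+
  have wsl: "ws ! l \<in> RowS v1 \<and> ws ! l \<in> RowS v2" if "l < j" for l
    using ws(1) nth_mem[of l ws] that len(3) by auto
  have "\<forall>l. \<exists>\<phi>. l < j \<longrightarrow> lin S1 \<phi> \<and> (\<forall>i<n. (ws ! l) i = \<phi> (v1 ! i))"
    using wsl unfolding RowS_def S1_def using len by auto
  hence "\<exists>\<phi>1. \<forall>l. l < j \<longrightarrow> lin S1 (\<phi>1 l) \<and> (\<forall>i<n. (ws ! l) i = \<phi>1 l (v1 ! i))" by (rule choice)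
  then obtain \<phi>1 where p1: "\<forall>l. l < j \<longrightarrow> lin S1 (\<phi>1 l) \<and> (\<forall>i<n. (ws ! l) i = \<phi>1 l (v1 ! i))" by blast
  have "\<forall>l. \<exists>\<phi>. l < j \<longrightarrow> lin S2 \<phi> \<and> (\<forall>i<n. (ws ! l) i = \<phi> (v2 ! i))"
    using wsl unfolding RowS_def S2_def using len by auto
  hence "\<exists>\<phi>2. \<forall>l. l < j \<longrightarrow> lin S2 (\<phi>2 l) \<and> (\<forall>i<n. (ws ! l) i = \<phi>2 l (v2 ! i))" by (rule choice)
  then obtain \<phi>2 where p2: "\<forall>l. l < j \<longrightarrow> lin S2 (\<phi>2 l) \<and> (\<forall>i<n. (ws ! l) i = \<phi>2 l (v2 ! i))" by blast
  define \<Psi> where "\<Psi> p = (\<lambda>l. if l < j then \<phi>1 l (fst p) - \<phi>2 l (snd p) else 0)" for p :: "'a \<times> 'a"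
  define A where "A = S1 \<times> S2"
  have finA: "finite A" unfolding A_def using finS1 finS2 by simp
  have A0: "0 \<in> A" unfolding A_def using fk.subsp_0[OF S1s] fk.subsp_0[OF S2s] by (simp add: zero_prod_def)
  have Aadd: "x + y \<in> A" if "x \<in> A" "y \<in> A" for x y
    using that fk.subsp_add[OF S1s] fk.subsp_add[OF S2s] unfolding A_def by (auto simp: mem_Times_iff)
  have Aneg: "- x \<in> A" if "x \<in> A" for x
    using that fk.subsp_neg[OF S1s] fk.subsp_neg[OF S2s] unfolding A_def by (auto simp: mem_Times_iff)
  have Psi_add: "\<Psi> (x + y) = \<Psi> x + \<Psi> y" if "x \<in> A" "y \<in> A" for x y
  proof
    fix l
    show "\<Psi> (x + y) l = (\<Psi> x + \<Psi> y) l"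
    proof (cases "l < j")
      case True
      have "\<phi>1 l (fst x + fst y) = \<phi>1 l (fst x) + \<phi>1 l (fst y)"
        using lin_add p1 True that unfolding A_def by (auto simp: mem_Times_iff)
      moreover have "\<phi>2 l (snd x + snd y) = \<phi>2 l (snd x) + \<phi>2 l (snd y)"
        using lin_add p2 True that unfolding A_def by (auto simp: mem_Times_iff)
      ultimately show ?thesis using True by (simp add: \<Psi>_def)
    qed (simp add: \<Psi>_def)
  qed
  have cardA: "card A = card {x\<in>A. \<Psi> x = 0} * card (\<Psi> ` A)"
    by (rule card_hom[OF finA A0 Aadd Aneg Psi_add])
  have indc: "\<forall>c. (\<forall>l<j. c l \<in> K) \<longrightarrow> (\<forall>x\<in>S1. (\<Sum>l<j. c l * \<phi>1 l x) = 0) \<longrightarrow> (\<forall>l<j. c l = 0)"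
  proof (intro allI impI)
    fix c l assume cK: "\<forall>l<j. c l \<in> K" and cz: "\<forall>x\<in>S1. (\<Sum>l<j. c l * \<phi>1 l x) = 0" and l: "l < j"
    have fz: "(\<Sum>l\<in>{..<j}. (\<lambda>i. c l * (ws ! l) i)) = 0"
    proof
      fix i
      show "(\<Sum>l\<in>{..<j}. (\<lambda>i. c l * (ws ! l) i)) i = 0 i"
      proof (cases "i < n")
        case True
        have "(\<Sum>l\<in>{..<j}. (\<lambda>i. c l * (ws ! l) i)) i = (\<Sum>l<j. c l * \<phi>1 l (v1 ! i))"
          unfolding sum_fun_apply using p1 True by simp
        also have "\<dots> = 0" using cz e_in_spanL[of i v1] True len unfolding S1_def by simp
        finally show ?thesis by simp
      next
        case False
        have "(ws ! l') i = 0" if "l' < j" for l'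
          using wsl[OF that] RowS_sub[of v1] False len unfolding KV_def by auto
        thus ?thesis unfolding sum_fun_apply by simp
      qed
    qed
    have "(\<forall>i\<in>{..<j}. c i \<in> K) \<longrightarrow> (\<Sum>i\<in>{..<j}. (\<lambda>a w i. a * w i) (c i) (ws ! i)) = 0 \<longrightarrow> (\<forall>i\<in>{..<j}. c i = 0)"
      using ws(2) unfolding fv.indepS_def by (rule spec)
    thus "c l = 0" using cK fz l by simp
  qed
  have lin1: "\<forall>l<j. lin S1 (\<phi>1 l)" using p1 by blast
  have sur: "\<forall>y\<in>KV j. \<exists>x\<in>S1. \<forall>l<j. \<phi>1 l x = y l" by (rule lemD[OF S1s lin1 indc])
  have "KV j \<subseteq> \<Psi> ` A"
  proof
    fix y assume y: "y \<in> KV j"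
    then obtain x where x: "x \<in> S1" "\<forall>l<j. \<phi>1 l x = y l" using sur by blast
    have "\<Psi> (x, 0) = y"
    proof
      fix l show "\<Psi> (x, 0) l = y l"
      proof (cases "l < j")
        case True
        have "\<phi>2 l 0 = 0" using lin_0[OF _ S2s] p2 True by blast
        thus ?thesis using True x by (simp add: \<Psi>_def)
      next
        case False thus ?thesis using y by (simp add: \<Psi>_def KV_def)
      qed
    qed
    moreover have "(x, 0) \<in> A" unfolding A_def using x fk.subsp_0[OF S2s] by simp
    ultimately show "y \<in> \<Psi> ` A" by force
  qed
  hence cPsi: "q ^ j \<le> card (\<Psi> ` A)" using card_mono[OF finite_imageI[OF finA]] card_KV by metis
  define V where "V = (\<lambda>b. (\<Sum>i<n. b i * v1 ! i, \<Sum>i<n. b i * v2 ! i)) ` KV n"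
  have Vker: "V \<subseteq> {x\<in>A. \<Psi> x = 0}"
  proof
    fix p assume "p \<in> V"
    then obtain b where b: "b \<in> KV n" "p = (\<Sum>i<n. b i * v1 ! i, \<Sum>i<n. b i * v2 ! i)"
      unfolding V_def by blast
    have bK: "\<forall>i\<in>{..<n}. b i \<in> K" using b(1) by (simp add: KV_def)
    have "fst p \<in> S1" unfolding S1_def spanL_def fk.spanS_def using b bK len by auto
    moreover have "snd p \<in> S2" unfolding S2_def spanL_def fk.spanS_def using b bK len by auto
    moreover have "\<Psi> p = 0"
    proof
      fix l show "\<Psi> p l = 0 l"
      proof (cases "l < j")
        case True
        have l1: "lin S1 (\<phi>1 l)" and l2: "lin S2 (\<phi>2 l)" using p1 p2 True by auto
        have "\<phi>1 l (fst p) = (\<Sum>i<n. b i * \<phi>1 l (v1 ! i))"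
          using lin_sum[OF l1 S1s, of "{..<n}" b "nth v1"] bK b(2) e_in_spanL[of _ v1] len
          unfolding S1_def by auto
        also have "\<dots> = (\<Sum>i<n. b i * (ws ! l) i)" using p1 True by simp
        also have "\<dots> = (\<Sum>i<n. b i * \<phi>2 l (v2 ! i))" using p2 True by simp
        also have "\<dots> = \<phi>2 l (snd p)"
          using lin_sum[OF l2 S2s, of "{..<n}" b "nth v2"] bK b(2) e_in_spanL[of _ v2] len
          unfolding S2_def by auto
        finally show ?thesis using True by (simp add: \<Psi>_def)
      qed (simp add: \<Psi>_def)
    qed
    ultimately show "p \<in> {x\<in>A. \<Psi> x = 0}" unfolding A_def by (simp add: mem_Times_iff)
  qed
  have "fk.spanS (\<lambda>i. v1!i - v2!i) {..<n} \<subseteq> (\<lambda>p. fst p - snd p) ` V"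
  proof
    fix z assume "z \<in> fk.spanS (\<lambda>i. v1!i - v2!i) {..<n}"
    then obtain c where c: "\<forall>i\<in>{..<n}. c i \<in> K" "z = (\<Sum>i<n. c i * (v1!i - v2!i))"
      unfolding fk.spanS_def by blast
    define b where "b i = (if i < n then c i else 0)" for i
    have bKV: "b \<in> KV n" using c(1) by (simp add: b_def KV_def)
    have "(\<Sum>i<n. b i * v1 ! i) - (\<Sum>i<n. b i * v2 ! i) = (\<Sum>i<n. b i * (v1!i - v2!i))"
      by (simp add: sum_subtractf right_diff_distrib)
    also have "\<dots> = z" unfolding c(2) by (rule sum.cong) (auto simp: b_def)
    finally show "z \<in> (\<lambda>p. fst p - snd p) ` V" unfolding V_def using bKV by force
  qed
  hence "card (fk.spanS (\<lambda>i. v1!i - v2!i) {..<n}) \<le> card ((\<lambda>p. fst p - snd p) ` V)"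
    by (intro card_mono finite_imageI) (auto simp: V_def finite_KV)
  also have "\<dots> \<le> card V" by (rule card_image_le) (simp add: V_def finite_KV)
  also have "\<dots> \<le> card {x\<in>A. \<Psi> x = 0}" by (rule card_mono) (use finA Vker in auto)
  finally have c1: "card (fk.spanS (\<lambda>i. v1!i - v2!i) {..<n}) \<le> card {x\<in>A. \<Psi> x = 0}" .
  have "card (fk.spanS (\<lambda>i. v1!i - v2!i) {..<n}) * q ^ j \<le> card {x\<in>A. \<Psi> x = 0} * card (\<Psi> ` A)"
    using c1 cPsi by (rule mult_le_mono)
  also have "\<dots> = card A" using cardA by simp
  also have "\<dots> = card S1 * card S2" unfolding A_def by (simp add: card_cartesian_product)
  finally show ?thesis unfolding S1_def S2_def .
qed


lemma lin_eval_lin: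
  assumes "\<forall>i\<in>A. b i \<in> K"
  shows "lin_eval q k f (\<Sum>i\<in>A. b i * a i) = (\<Sum>i\<in>A. b i * lin_eval q k f (a i))"
proof -
  have "(\<Sum>i\<in>A. b i * a i) ^ (q ^ l) = (\<Sum>i\<in>A. b i * a i ^ (q ^ l))" for l
  proof -
    have "(\<Sum>i\<in>A. b i * a i) ^ (q ^ l) = (\<Sum>i\<in>A. (b i * a i) ^ (q ^ l))" by (rule frob_sum)
    also have "\<dots> = (\<Sum>i\<in>A. b i * a i ^ (q ^ l))"
      using assms by (intro sum.cong) (auto simp: power_mult_distrib K_pow)
    finally show ?thesis .
  qed
  hence "lin_eval q k f (\<Sum>i\<in>A. b i * a i) = (\<Sum>l<k. f l * (\<Sum>i\<in>A. b i * a i ^ (q ^ l)))"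
    unfolding lin_eval_def by simp
  also have "\<dots> = (\<Sum>l<k. \<Sum>i\<in>A. b i * (f l * a i ^ (q ^ l)))"
    by (simp add: sum_distrib_left mult.left_commute)
  also have "\<dots> = (\<Sum>i\<in>A. \<Sum>l<k. b i * (f l * a i ^ (q ^ l)))" by (rule sum.swap)
  also have "\<dots> = (\<Sum>i\<in>A. b i * lin_eval q k f (a i))"
    unfolding lin_eval_def by (simp add: sum_distrib_left)
  finally show ?thesis .
qed

lemma MD:
  assumes al: "length alphas = n" "q_indep q alphas {..<n}" and k: "k \<ge> 1"
    and nz: "i0 < n" "lin_eval q k f (alphas ! i0) \<noteq> 0"
  shows "q ^ n \<le> q ^ (k - 1) * card (fk.spanS (\<lambda>i. lin_eval q k f (alphas ! i)) {..<n})"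
proof -
  define g where "g i = lin_eval q k f (alphas ! i)" for i
  define L where "L b = (\<Sum>i<n. b i * g i)" for b :: "nat \<Rightarrow> 'a"
  have Ladd: "L (x + y) = L x + L y" if "x \<in> KV n" "y \<in> KV n" for x y
    unfolding L_def by (simp add: distrib_right sum.distrib)
  have ch: "card (KV n) = card {x\<in>KV n. L x = 0} * card (L ` KV n)"
    by (rule card_hom) (simp_all add: finite_KV KV_zero KV_add KV_neg Ladd)
  have imsub: "L ` KV n \<subseteq> fk.spanS g {..<n}"
    unfolding L_def fk.spanS_def KV_def by auto
  have c2: "card (L ` KV n) \<le> card (fk.spanS g {..<n})"
    by (rule card_mono[OF fk.finite_span imsub]) simp
  define M where "M b = (\<Sum>i<n. b i * alphas ! i)" for b :: "nat \<Rightarrow> 'a"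
  have injM: "inj_on M (KV n)"
  proof (rule inj_onI)
    fix b b' assume h: "b \<in> KV n" "b' \<in> KV n" "M b = M b'"
    have "(\<Sum>i\<in>{..<n}. (b i - b' i) * alphas ! i) = 0"
      using h(3) unfolding M_def by (simp add: left_diff_distrib sum_subtractf)
    moreover have "\<forall>i\<in>{..<n}. b i - b' i \<in> subfield_q q"
    proof
      fix i assume "i \<in> {..<n}"
      hence "b i \<in> K" "b' i \<in> K" using h(1,2) by (auto simp: KV_def)
      thus "b i - b' i \<in> subfield_q q" using K_diff K_def by blast
    qed
    moreover have "(\<forall>i\<in>{..<n}. (\<lambda>i. b i - b' i) i \<in> subfield_q q) \<longrightarrow>
        (\<Sum>i\<in>{..<n}. (\<lambda>i. b i - b' i) i * alphas ! i) = 0 \<longrightarrow> (\<forall>i\<in>{..<n}. (\<lambda>i. b i - b' i) i = 0)"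
      using al(2) unfolding q_indep_def by (rule spec)
    ultimately have "\<forall>i\<in>{..<n}. b i - b' i = 0" by simp
    show "b = b'"
    proof
      fix i show "b i = b' i"
      proof (cases "i < n")
        case True thus ?thesis using \<open>\<forall>i\<in>{..<n}. b i - b' i = 0\<close> by simp
      next
        case False thus ?thesis using h(1,2) by (simp add: KV_def)
      qed
    qed
  qed
  define P :: "'a poly" where "P = (\<Sum>l<k. monom (f l) (q ^ l))"
  have polyP: "poly P x = lin_eval q k f x" for x
    unfolding P_def lin_eval_def by (simp add: poly_sum poly_monom)
  have Pnz: "P \<noteq> 0" using nz polyP by auto
  have degP: "degree P \<le> q ^ (k - 1)" unfolding P_def
  proof (rule degree_sum_le)
    fix l assume "l \<in> {..<k}"
    hence "q ^ l \<le> q ^ (k - 1)" using q_ge2 by (intro power_increasing) auto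
    thus "degree (monom (f l) (q ^ l)) \<le> q ^ (k - 1)" using degree_monom_le order.trans by blast
  qed simp
  have Mker: "M ` {x\<in>KV n. L x = 0} \<subseteq> {x. poly P x = 0}"
  proof
    fix y assume "y \<in> M ` {x\<in>KV n. L x = 0}"
    then obtain b where b: "b \<in> KV n" "L b = 0" "y = M b" by blast
    have "poly P y = lin_eval q k f (\<Sum>i<n. b i * alphas ! i)" using b(3) polyP by (simp add: M_def)
    also have "\<dots> = (\<Sum>i<n. b i * lin_eval q k f (alphas ! i))"
      by (rule lin_eval_lin) (use b(1) in \<open>auto simp: KV_def\<close>)
    also have "\<dots> = L b" by (simp add: L_def g_def)
    finally show "y \<in> {x. poly P x = 0}" using b(2) by simp
  qed
  have "card {x\<in>KV n. L x = 0} = card (M ` {x\<in>KV n. L x = 0})"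
    by (rule card_image[symmetric]) (rule inj_on_subset[OF injM], auto)
  also have "\<dots> \<le> card {x. poly P x = 0}" by (rule card_mono[OF poly_roots_finite[OF Pnz] Mker])
  also have "\<dots> \<le> degree P" by (rule card_poly_roots_bound[OF Pnz])
  finally have c1: "card {x\<in>KV n. L x = 0} \<le> q ^ (k - 1)" using degP by simp
  have "q ^ n = card {x\<in>KV n. L x = 0} * card (L ` KV n)" using ch card_KV by simp
  also have "\<dots> \<le> q ^ (k - 1) * card (fk.spanS g {..<n})" using c1 c2 by (rule mult_le_mono)
  finally show ?thesis unfolding g_def .
qed

end

lemma weierstrass_prod:
  fixes a :: "nat \<Rightarrow> real"
  assumes "\<And>i. i \<in> A \<Longrightarrow> 0 \<le> a i \<and> a i \<le> 1"
  shows "1 - (\<Sum>i\<in>A. a i) \<le> (\<Prod>i\<in>A. 1 - a i)"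
  using assms
proof (induction A rule: infinite_finite_induct)
  case (insert i A)
  have IH: "1 - (\<Sum>i\<in>A. a i) \<le> (\<Prod>i\<in>A. 1 - a i)" using insert by auto
  have ai: "0 \<le> a i" "a i \<le> 1" using insert by auto
  have S: "0 \<le> (\<Sum>i\<in>A. a i)" using insert by (intro sum_nonneg) auto
  have "1 - (\<Sum>j\<in>insert i A. a j) = 1 - a i - (\<Sum>i\<in>A. a i)" using insert by simp
  also have "\<dots> \<le> (1 - a i) * (1 - (\<Sum>i\<in>A. a i))" using ai S by (simp add: algebra_simps)
  also have "\<dots> \<le> (1 - a i) * (\<Prod>i\<in>A. 1 - a i)" using IH ai by (intro mult_left_mono) auto
  also have "\<dots> = (\<Prod>j\<in>insert i A. 1 - a j)" using insert by simp
  finally show ?case .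
qed auto

lemma geom_le:
  fixes x :: real assumes "0 \<le> x" "x < 1"
  shows "(\<Sum>j<r. x ^ j) \<le> 1 / (1 - x)"
proof -
  have "(1 - x) * (\<Sum>j<r. x ^ j) = 1 - x ^ r" by (rule one_diff_power_eq[symmetric])
  also have "\<dots> \<le> 1" using assms by simp
  finally show ?thesis using assms by (simp add: field_simps)
qed

lemma prod_lower:
  fixes q :: nat
  assumes q: "q \<ge> 2" and st: "1 \<le> s" "s \<le> t"
  shows "real q ^ (t * s) / 4 \<le> (\<Prod>i<s. real q ^ t - real q ^ i)"
proof -
  define x :: real where "x = 1 / real q"
  have x0: "0 \<le> x" and xh: "x \<le> 1/2" using q by (auto simp: x_def field_simps)
  have fac: "real q ^ t - real q ^ i = real q ^ t * (1 - x ^ (t - i))" if "i \<le> t" for i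
  proof -
    have "real q ^ t * x ^ (t - i) = real q ^ i"
    proof -
      have "real q ^ t = real q ^ i * real q ^ (t - i)" using that by (simp flip: power_add)
      thus ?thesis using q by (simp add: x_def power_divide)
    qed
    thus ?thesis by (simp add: algebra_simps)
  qed
  have "(\<Prod>i<s. real q ^ t - real q ^ i) = (\<Prod>i<s. real q ^ t * (1 - x ^ (t - i)))"
    using st fac by (intro prod.cong) auto
  also have "\<dots> = real q ^ (t * s) * (\<Prod>i<s. 1 - x ^ (t - i))"
    by (simp add: prod.distrib power_mult)
  finally have eq: "(\<Prod>i<s. real q ^ t - real q ^ i) = real q ^ (t * s) * (\<Prod>i<s. 1 - x ^ (t - i))" .
  obtain r where r: "s = Suc r" using st by (cases s) auto
  have f1: "1/2 \<le> 1 - x ^ (t - r)"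
  proof -
    have "x ^ (t - r) \<le> x ^ 1" using x0 xh r st by (intro power_decreasing) auto
    thus ?thesis using xh by simp
  qed
  have sum_le: "(\<Sum>i<r. x ^ (t - i)) \<le> 1/2"
  proof -
    have ex: "(t - r + 1) + (r - Suc i) = t - i" if "i < r" for i using r st that by auto
    have "(\<Sum>i<r. x ^ (t - i)) = (\<Sum>i<r. x ^ ((t - r + 1) + (r - Suc i)))"
      by (intro sum.cong) (simp_all only: ex lessThan_iff)
    also have "\<dots> = (\<Sum>i<r. x ^ ((t - r + 1) + i))"
      by (rule sum.nat_diff_reindex)
    also have "\<dots> = x ^ (t - r + 1) * (\<Sum>i<r. x ^ i)" by (simp add: power_add sum_distrib_left mult.assoc)
    also have "\<dots> \<le> x ^ 2 * (1 / (1 - x))"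
    proof (rule mult_mono)
      show "x ^ (t - r + 1) \<le> x ^ 2" using x0 xh r st by (intro power_decreasing) auto
      show "(\<Sum>i<r. x ^ i) \<le> 1 / (1 - x)" using x0 xh by (intro geom_le) auto
    qed (use x0 xh in \<open>auto intro: sum_nonneg\<close>)
    also have "\<dots> \<le> 1/2"
    proof -
      have "x ^ 2 \<le> 1/4" using x0 xh power_mono[of x "1/2" 2] by (simp add: power2_eq_square)
      moreover have "1 / (1 - x) \<le> 2" using xh by (simp add: field_simps)
      ultimately have "x ^ 2 * (1 / (1 - x)) \<le> 1/4 * 2"
        by (intro mult_mono) (use x0 xh in auto)
      thus ?thesis by simp
    qed
    finally show ?thesis .
  qed
  have p2: "1/2 \<le> (\<Prod>i<r. 1 - x ^ (t - i))"
  proof -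
    have "1 - (\<Sum>i<r. x ^ (t - i)) \<le> (\<Prod>i<r. 1 - x ^ (t - i))"
      by (rule weierstrass_prod) (use x0 xh in \<open>auto intro: power_le_one\<close>)
    thus ?thesis using sum_le by simp
  qed
  have "(\<Prod>i<s. 1 - x ^ (t - i)) = (\<Prod>i<r. 1 - x ^ (t - i)) * (1 - x ^ (t - r))"
    using r by simp
  also have "\<dots> \<ge> 1/2 * (1/2)" using p2 f1 by (intro mult_mono) auto
  finally have "1/4 \<le> (\<Prod>i<s. 1 - x ^ (t - i))" by simp
  hence "real q ^ (t * s) * (1/4) \<le> real q ^ (t * s) * (\<Prod>i<s. 1 - x ^ (t - i))"
    by (intro mult_left_mono) auto
  thus ?thesis using eq by simp
qed

lemma prod_upper:
  fixes q :: nat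
  assumes "q \<ge> 2" "s \<le> n"
  shows "(\<Prod>i<s. real q ^ n - real q ^ i) \<le> real q ^ (n * s)"
proof -
  have "(\<Prod>i<s. real q ^ n - real q ^ i) \<le> (\<Prod>i<s. real q ^ n)"
  proof (rule prod_mono)
    fix i assume "i \<in> {..<s}"
    hence "real q ^ i \<le> real q ^ n" using assms by (intro power_increasing) auto
    thus "0 \<le> real q ^ n - real q ^ i \<and> real q ^ n - real q ^ i \<le> real q ^ n" by simp
  qed
  thus ?thesis by (simp add: power_mult)
qed

lemma gb_ratio:
  fixes q :: nat
  assumes "q \<ge> 2"
  shows "gauss_binom q n s / gauss_binom q t s = (\<Prod>i<s. real q ^ n - real q ^ i) / (\<Prod>i<s. real q ^ t - real q ^ i)"
proof -
  have cpos: "(\<Prod>i<s. real q ^ s - real q ^ i) \<noteq> 0"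
  proof -
    have "real q ^ i < real q ^ s" if "i < s" for i using assms that by (intro power_strict_increasing) auto
    hence "\<forall>i\<in>{..<s}. real q ^ s - real q ^ i \<noteq> 0" by fastforce
    thus ?thesis by (simp add: prod_zero_iff)
  qed
  show ?thesis unfolding gauss_binom_def prod_dividef using cpos by simp
qed

lemma ratio_bound:
  fixes q :: nat
  assumes q: "q \<ge> 2" and st: "1 \<le> s" "s \<le> t" "t \<le> n"
  shows "gauss_binom q n s / gauss_binom q t s \<le> 4 * real q ^ (s * (n - t))"
proof -
  have lo: "real q ^ (t * s) / 4 \<le> (\<Prod>i<s. real q ^ t - real q ^ i)" by (rule prod_lower[OF q st(1,2)])
  have up: "(\<Prod>i<s. real q ^ n - real q ^ i) \<le> real q ^ (n * s)" using q st by (intro prod_upper) auto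
  have pos: "0 < real q ^ (t * s) / 4" using q by simp
  have "gauss_binom q n s / gauss_binom q t s \<le> real q ^ (n * s) / (real q ^ (t * s) / 4)"
    unfolding gb_ratio[OF q] using lo up pos
    by (intro frac_le) (auto intro: prod_nonneg simp: power_increasing)
  also have "\<dots> = 4 * real q ^ (s * (n - t))"
  proof -
    have "real q ^ (n * s) = real q ^ (t * s) * real q ^ (s * (n - t))"
      using st by (simp add: power_add[symmetric] algebra_simps diff_mult_distrib2)
    thus ?thesis using q by simp
  qed
  finally show ?thesis .
qed


locale gcode = gset p e q m K for p e q m and K :: "'a::{field,finite} set" +
  fixes alphas :: "'a list" and n k :: nat and r :: "'a list"
  assumes al: "length alphas = n" and qi: "q_indep q alphas {..<n}" and k1: "1 \<le> k" and kn: "k \<le> n"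
    and rl: "length r = n"
begin

definition C :: "'a list set" where "C = gabidulin q alphas k"
definition er :: "'a list \<Rightarrow> 'a list" where "er x = map2 (-) x r"

lemma C_map: "x \<in> C \<Longrightarrow> \<exists>f. x = map (lin_eval q k f) alphas"
  unfolding C_def gabidulin_def by blast

lemma C_len: "x \<in> C \<Longrightarrow> length x = n"
proof -
  assume "x \<in> C"
  then obtain f where "x = map (lin_eval q k f) alphas" using C_map by blast
  thus ?thesis using al by simp
qed

lemma er_len: "length x = n \<Longrightarrow> length (er x) = n"
  unfolding er_def using rl by simp

lemma er_nth: "length x = n \<Longrightarrow> i < n \<Longrightarrow> er x ! i = x ! i - r ! i"
  unfolding er_def using rl by simp

lemma finite_C: "finite C"
proof -
  have "C \<subseteq> {xs. set xs \<subseteq> UNIV \<and> length xs = n}" using C_len by auto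
  moreover have "finite {xs. set xs \<subseteq> (UNIV :: 'a set) \<and> length xs = n}"
    by (rule finite_lists_length_eq) simp
  ultimately show ?thesis using finite_subset by blast
qed

lemma dist:
  assumes "x \<in> C" "y \<in> C" "x \<noteq> y"
  shows "q ^ (n - k + 1) \<le> card (fk.spanS (\<lambda>i. er x ! i - er y ! i) {..<n})"
proof -
  obtain f1 where f1: "x = map (lin_eval q k f1) alphas" using C_map assms(1) by blast
  obtain f2 where f2: "y = map (lin_eval q k f2) alphas" using C_map assms(2) by blast
  define f where "f l = f1 l - f2 l" for l
  have lx: "length x = n" "length y = n" using assms C_len by auto
  have eq: "er x ! i - er y ! i = lin_eval q k f (alphas ! i)" if "i < n" for i
  proof -
    have "er x ! i - er y ! i = x ! i - y ! i" using er_nth lx that by simp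
    also have "\<dots> = lin_eval q k f1 (alphas ! i) - lin_eval q k f2 (alphas ! i)" using f1 f2 that al by simp
    also have "\<dots> = lin_eval q k f (alphas ! i)"
      unfolding lin_eval_def f_def by (simp add: sum_subtractf left_diff_distrib)
    finally show ?thesis .
  qed
  have sp: "fk.spanS (\<lambda>i. er x ! i - er y ! i) {..<n} = fk.spanS (\<lambda>i. lin_eval q k f (alphas ! i)) {..<n}"
    by (rule fk.span_cong) (simp add: eq)
  obtain i0 where i0: "i0 < n" "x ! i0 \<noteq> y ! i0" using assms(3) lx nth_equalityI by metis
  have "er x ! i0 - er y ! i0 = (x ! i0 - r ! i0) - (y ! i0 - r ! i0)" using er_nth lx i0 by simp
  also have "\<dots> = x ! i0 - y ! i0" by simp
  finally have "lin_eval q k f (alphas ! i0) = x ! i0 - y ! i0" using eq[OF i0(1)] by simp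
  hence "lin_eval q k f (alphas ! i0) \<noteq> 0" using i0 by simp
  hence "q ^ n \<le> q ^ (k - 1) * card (fk.spanS (\<lambda>i. lin_eval q k f (alphas ! i)) {..<n})"
    using MD[OF al qi k1 i0(1)] by simp
  moreover have "q ^ n = q ^ (k - 1) * q ^ (n - k + 1)"
  proof -
    have "n = (k - 1) + (n - k + 1)" using k1 kn by simp
    hence "q ^ n = q ^ ((k - 1) + (n - k + 1))" by (rule arg_cong)
    thus ?thesis by (simp only: power_add)
  qed
  ultimately have "q ^ (k - 1) * q ^ (n - k + 1) \<le> q ^ (k - 1) * card (fk.spanS (\<lambda>i. er x ! i - er y ! i) {..<n})"
    using sp by simp
  thus ?thesis using q_ge2 by simp
qed

lemma key:
  assumes "x \<in> C" "y \<in> C" "x \<noteq> y" "length ws = j" "set ws \<subseteq> RowS (er x) \<inter> RowS (er y)"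
    "fv.indepS (nth ws) {..<j}"
  shows "n - k + 1 + j \<le> rank_q q (er x) + rank_q q (er y)"
proof -
  have lx: "length (er x) = n" "length (er y) = n" using assms C_len er_len by auto
  have "q ^ (n - k + 1 + j) = q ^ (n - k + 1) * q ^ j" by (simp add: power_add)
  also have "\<dots> \<le> card (fk.spanS (\<lambda>i. er x ! i - er y ! i) {..<n}) * q ^ j"
    using dist[OF assms(1-3)] by (rule mult_right_mono) simp
  also have "\<dots> \<le> card (spanL (er x)) * card (spanL (er y))"
    by (rule lemG[OF lx assms(4-6)])
  also have "\<dots> = q ^ (rank_q q (er x) + rank_q q (er y))" by (simp add: card_spanL power_add)
  finally have "q ^ (n - k + 1 + j) \<le> q ^ (rank_q q (er x) + rank_q q (er y))" .
  thus ?thesis using q_ge2 power_le_imp_le_exp[of q] by (metis one_less_numeral_iff order_less_le_trans semiring_norm(76))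
qed

lemma key0:
  assumes "x \<in> C" "y \<in> C" "x \<noteq> y"
  shows "n - k + 1 \<le> rank_q q (er x) + rank_q q (er y)"
  using key[OF assms, of "[]" 0] by (simp add: fv.indepS_def)


lemma Obj_card:
  assumes "x \<in> C" "rank_q q (er x) = t"
  shows "(\<Prod>i<s. q ^ t - q ^ i) \<le> card (fv.IT (RowS (er x)) s)"
proof -
  have c: "card (fv.IT (RowS (er x)) s) = (\<Prod>i<s. card (RowS (er x)) - q ^ i)"
    by (rule fv.card_IT[OF RowS_subsp finite_RowS])
  have "q ^ t \<le> card (RowS (er x))" using card_RowS[of "er x"] assms by simp
  hence "(\<Prod>i<s. q ^ t - q ^ i) \<le> (\<Prod>i<s. card (RowS (er x)) - q ^ i)"
    by (intro prod_mono) auto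
  thus ?thesis using c by simp
qed

lemma Obj_sub: "x \<in> C \<Longrightarrow> fv.IT (RowS (er x)) s \<subseteq> fv.IT (KV n) s"
  using fv.IT_mono[OF RowS_sub[of "er x"]] er_len C_len by simp

lemma Obj_disj:
  assumes "x \<in> C" "y \<in> C" "x \<noteq> y" "n - k + 1 + s > rank_q q (er x) + rank_q q (er y)"
  shows "fv.IT (RowS (er x)) s \<inter> fv.IT (RowS (er y)) s = {}"
proof (rule ccontr)
  assume "fv.IT (RowS (er x)) s \<inter> fv.IT (RowS (er y)) s \<noteq> {}"
  then obtain ws where "ws \<in> fv.IT (RowS (er x)) s" "ws \<in> fv.IT (RowS (er y)) s" by blast
  hence "length ws = s" "set ws \<subseteq> RowS (er x) \<inter> RowS (er y)" "fv.indepS (nth ws) {..<s}"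
    by (auto simp: fv.IT_def)
  from key[OF assms(1-3) this] assms(4) show False by simp
qed

lemma level_bound:
  assumes "(n - k + 1 - 1) div 2 < t" "t < n - k + 1"
  defines "s \<equiv> 2 * t + 1 - (n - k + 1)"
  shows "card {x\<in>C. rank_q q (er x) = t} * (\<Prod>i<s. q ^ t - q ^ i) \<le> (\<Prod>i<s. q ^ n - q ^ i)"
proof -
  let ?L = "{x\<in>C. rank_q q (er x) = t}"
  have finL: "finite ?L" using finite_C by simp
  have ds: "n - k + 1 + s = 2 * t + 1" using assms by (simp add: s_def)
  have disj: "\<forall>x\<in>?L. \<forall>y\<in>?L. x \<noteq> y \<longrightarrow> fv.IT (RowS (er x)) s \<inter> fv.IT (RowS (er y)) s = {}"
    using Obj_disj ds by auto
  have "card ?L * (\<Prod>i<s. q ^ t - q ^ i) = (\<Sum>x\<in>?L. \<Prod>i<s. q ^ t - q ^ i)" by simp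
  also have "\<dots> \<le> (\<Sum>x\<in>?L. card (fv.IT (RowS (er x)) s))"
    by (rule sum_mono) (use Obj_card in auto)
  also have "\<dots> = card (\<Union>x\<in>?L. fv.IT (RowS (er x)) s)"
    by (rule card_UN_disjoint[symmetric]) (use finL disj fv.finite_IT finite_RowS in auto)
  also have "\<dots> \<le> card (fv.IT (KV n) s)"
    by (rule card_mono[OF fv.finite_IT[OF finite_KV]]) (use Obj_sub in auto)
  also have "\<dots> = (\<Prod>i<s. q ^ n - q ^ i)"
    by (simp add: fv.card_IT[OF KV_subsp finite_KV] card_KV)
  finally show ?thesis .
qed

lemma level_refined:
  assumes x0: "x0 \<in> C" "rank_q q (er x0) = h" and dh: "n - k + 1 = 2 * h + 1"
  shows "card {x\<in>C. rank_q q (er x) = h + 1} * (\<Prod>i<2. q ^ (h + 1) - q ^ i) + (q ^ h - 1) * (q ^ n - q)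
          \<le> (\<Prod>i<2. q ^ n - q ^ i)"
proof -
  let ?L = "{x\<in>C. rank_q q (er x) = h + 1}"
  let ?R0 = "RowS (er x0)"
  define Ex where "Ex = {ws @ [w] | ws w. ws \<in> fv.IT ?R0 1 \<and> w \<in> KV n - fv.spanS (nth ws) {..<1}}"
  have finL: "finite ?L" using finite_C by simp
  have R0sub: "fv.IT ?R0 1 \<subseteq> fv.IT (KV n) 1" using Obj_sub[OF x0(1)] .
  have cEx: "card Ex = card (fv.IT ?R0 1) * (card (KV n) - q ^ 1)"
    unfolding Ex_def by (rule fv.card_snoc[OF KV_subsp finite_KV R0sub])
  have "card (fv.IT ?R0 1) = card ?R0 - 1"
    using fv.card_IT[OF RowS_subsp finite_RowS, of "er x0" 1] by simp
  moreover have "q ^ h \<le> card ?R0" using card_RowS[of "er x0"] x0 by simp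
  ultimately have "q ^ h - 1 \<le> card (fv.IT ?R0 1)" by simp
  hence cEx2: "(q ^ h - 1) * (q ^ n - q) \<le> card Ex" using cEx card_KV by simp
  have Exsub: "Ex \<subseteq> fv.IT (KV n) 2"
  proof -
    have "fv.IT (KV n) (Suc 1) = {ws @ [x] | ws x. ws \<in> fv.IT (KV n) 1 \<and> x \<in> KV n - fv.spanS (nth ws) {..<1}}"
      by (rule fv.IT_snoc_eq)
    thus ?thesis unfolding Ex_def using R0sub by (auto simp: numeral_2_eq_2)
  qed
  have disjE: "Ex \<inter> fv.IT (RowS (er x)) 2 = {}" if "x \<in> ?L" for x
  proof (rule ccontr)
    assume "Ex \<inter> fv.IT (RowS (er x)) 2 \<noteq> {}"
    then obtain ws w where h1: "ws \<in> fv.IT ?R0 1" "ws @ [w] \<in> fv.IT (RowS (er x)) (Suc 1)"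
      unfolding Ex_def by (auto simp: numeral_2_eq_2)
    then obtain ws' w' where "ws @ [w] = ws' @ [w']" "ws' \<in> fv.IT (RowS (er x)) 1"
      unfolding fv.IT_snoc_eq by blast
    hence h2: "ws \<in> fv.IT (RowS (er x)) 1" by simp
    have xC: "x \<in> C" and rx: "rank_q q (er x) = h + 1" using that by auto
    hence "x \<noteq> x0" using x0 by auto
    have "length ws = 1" "set ws \<subseteq> RowS (er x) \<inter> RowS (er x0)" "fv.indepS (nth ws) {..<1}"
      using h1 h2 by (auto simp: fv.IT_def)
    from key[OF xC x0(1) \<open>x \<noteq> x0\<close> this] rx x0 dh show False by simp
  qed
  have disj: "\<forall>x\<in>?L. \<forall>y\<in>?L. x \<noteq> y \<longrightarrow> fv.IT (RowS (er x)) 2 \<inter> fv.IT (RowS (er y)) 2 = {}"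
    using Obj_disj dh by auto
  have "card ?L * (\<Prod>i<2. q ^ (h + 1) - q ^ i) = (\<Sum>x\<in>?L. \<Prod>i<2. q ^ (h + 1) - q ^ i)" by simp
  also have "\<dots> \<le> (\<Sum>x\<in>?L. card (fv.IT (RowS (er x)) 2))"
  proof (rule sum_mono)
    fix x assume "x \<in> ?L"
    thus "(\<Prod>i<2. q ^ (h + 1) - q ^ i) \<le> card (fv.IT (RowS (er x)) 2)" by (intro Obj_card) auto
  qed
  also have "\<dots> = card (\<Union>x\<in>?L. fv.IT (RowS (er x)) 2)"
    by (rule card_UN_disjoint[symmetric]) (use finL disj fv.finite_IT finite_RowS in auto)
  finally have c1: "card ?L * (\<Prod>i<2. q ^ (h + 1) - q ^ i) \<le> card (\<Union>x\<in>?L. fv.IT (RowS (er x)) 2)" .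
  have finU: "finite (\<Union>x\<in>?L. fv.IT (RowS (er x)) 2)" using finL fv.finite_IT finite_RowS by auto
  have finEx: "finite Ex" using Exsub fv.finite_IT[OF finite_KV] finite_subset by blast
  have "card (\<Union>x\<in>?L. fv.IT (RowS (er x)) 2) + card Ex = card ((\<Union>x\<in>?L. fv.IT (RowS (er x)) 2) \<union> Ex)"
    by (rule card_Un_disjoint[symmetric]) (use finU finEx disjE in auto)
  also have "\<dots> \<le> card (fv.IT (KV n) 2)"
    by (rule card_mono[OF fv.finite_IT[OF finite_KV]]) (use Obj_sub Exsub in auto)
  also have "\<dots> = (\<Prod>i<2. q ^ n - q ^ i)"
    by (simp add: fv.card_IT[OF KV_subsp finite_KV] card_KV)
  finally show ?thesis using c1 cEx2 by linarith
qed

end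

lemma real_prod_diff:
  fixes q :: nat assumes "q \<ge> 1" "s \<le> t"
  shows "real (\<Prod>i<s. q ^ t - q ^ i) = (\<Prod>i<s. real q ^ t - real q ^ i)"
proof -
  have "real (\<Prod>i<s. q ^ t - q ^ i) = (\<Prod>i<s. real (q ^ t - q ^ i))" by (rule of_nat_prod)
  also have "\<dots> = (\<Prod>i<s. real q ^ t - real q ^ i)"
  proof (rule prod.cong)
    fix i assume "i \<in> {..<s}"
    hence "q ^ i \<le> q ^ t" using assms by (intro power_increasing) auto
    thus "real (q ^ t - q ^ i) = real q ^ t - real q ^ i" by (simp add: of_nat_diff)
  qed simp
  finally show ?thesis .
qed

lemma prod_pos:
  fixes q :: nat assumes "q \<ge> 2" "s \<le> t"
  shows "0 < (\<Prod>i<s. real q ^ t - real q ^ i)"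
proof (rule prod_pos)
  fix i assume "i \<in> {..<s}"
  hence "real q ^ i < real q ^ t" using assms by (intro power_strict_increasing) auto
  thus "0 < real q ^ t - real q ^ i" by simp
qed

lemma prod_mono_t:
  fixes q :: nat assumes "q \<ge> 2" "s \<le> t" "t \<le> n"
  shows "(\<Prod>i<s. real q ^ t - real q ^ i) \<le> (\<Prod>i<s. real q ^ n - real q ^ i)"
proof (rule prod_mono)
  fix i assume "i \<in> {..<s}"
  hence "real q ^ i < real q ^ t" using assms by (intro power_strict_increasing) auto
  moreover have "real q ^ t \<le> real q ^ n" using assms by (intro power_increasing) auto
  ultimately show "0 \<le> real q ^ t - real q ^ i \<and> real q ^ t - real q ^ i \<le> real q ^ n - real q ^ i" by simp
qed

context gcode
begin

abbreviation B :: "nat \<Rightarrow> real" where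
  "B t \<equiv> gauss_binom q n (2 * t + 1 - (n - k + 1)) / gauss_binom q t (2 * t + 1 - (n - k + 1))"

lemma B_ge1:
  assumes "(n - k + 1 - 1) div 2 < t" "t < n - k + 1"
  shows "1 \<le> B t"
proof -
  define s where "s = 2 * t + 1 - (n - k + 1)"
  have st: "s \<le> t" "t \<le> n" using assms kn k1 by (auto simp: s_def)
  have "B t = (\<Prod>i<s. real q ^ n - real q ^ i) / (\<Prod>i<s. real q ^ t - real q ^ i)"
    unfolding s_def by (rule gb_ratio[OF q_ge2])
  moreover have "0 < (\<Prod>i<s. real q ^ t - real q ^ i)" using prod_pos[OF q_ge2 st(1)] .
  moreover have "(\<Prod>i<s. real q ^ t - real q ^ i) \<le> (\<Prod>i<s. real q ^ n - real q ^ i)"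
    using prod_mono_t[OF q_ge2 st] .
  ultimately show ?thesis by simp
qed

lemma level_real:
  assumes "(n - k + 1 - 1) div 2 < t" "t < n - k + 1"
  shows "real (card {x\<in>C. rank_q q (er x) = t}) \<le> B t"
proof -
  define s where "s = 2 * t + 1 - (n - k + 1)"
  have st: "s \<le> t" "t \<le> n" using assms kn k1 by (auto simp: s_def)
  have q1: "q \<ge> 1" using q_ge2 by simp
  have "card {x\<in>C. rank_q q (er x) = t} * (\<Prod>i<s. q ^ t - q ^ i) \<le> (\<Prod>i<s. q ^ n - q ^ i)"
    unfolding s_def by (rule level_bound[OF assms])
  hence "real (card {x\<in>C. rank_q q (er x) = t} * (\<Prod>i<s. q ^ t - q ^ i)) \<le> real (\<Prod>i<s. q ^ n - q ^ i)"
    by (simp only: of_nat_le_iff)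
  hence "real (card {x\<in>C. rank_q q (er x) = t}) * (\<Prod>i<s. real q ^ t - real q ^ i) \<le> (\<Prod>i<s. real q ^ n - real q ^ i)"
    unfolding of_nat_mult real_prod_diff[OF q1 st(1)] real_prod_diff[OF q1 order.trans[OF st]] .
  moreover have "0 < (\<Prod>i<s. real q ^ t - real q ^ i)" using prod_pos[OF q_ge2 st(1)] .
  ultimately have "real (card {x\<in>C. rank_q q (er x) = t}) \<le> (\<Prod>i<s. real q ^ n - real q ^ i) / (\<Prod>i<s. real q ^ t - real q ^ i)"
    by (simp add: field_simps)
  thus ?thesis unfolding s_def gb_ratio[OF q_ge2] .
qed

lemma refined_real:
  assumes x0: "x0 \<in> C" "rank_q q (er x0) = h" and dh: "n - k + 1 = 2 * h + 1" and h1: "h \<ge> 1"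
  shows "real (card {x\<in>C. rank_q q (er x) = h + 1}) + 1 \<le> B (h + 1)"
proof -
  let ?L = "real (card {x\<in>C. rank_q q (er x) = h + 1})"
  define a where "a = real q"
  define Q where "Q = a ^ h"
  have a2: "a \<ge> 2" using q_ge2 by (simp add: a_def)
  have Qa: "Q \<ge> a" unfolding Q_def using a2 h1 power_increasing[of 1 h a] by simp
  have n2: "n \<ge> 2 * h + 1" using dh k1 kn by simp
  have s2: "2 * (h + 1) + 1 - (n - k + 1) = 2" using dh by simp
  have Pt: "(\<Prod>i<2. a ^ (h + 1) - a ^ i) = (a * Q - 1) * (a * Q - a)"
    by (simp add: Q_def numeral_2_eq_2 lessThan_Suc power_Suc)
  have Pn: "(\<Prod>i<2. a ^ n - a ^ i) = (a ^ n - 1) * (a ^ n - a)"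
    by (simp add: numeral_2_eq_2 lessThan_Suc)
  have ineq: "(a * Q - 1) * (a * Q - a) \<le> (Q - 1) * (a ^ n - a)"
  proof -
    have e1: "a ^ (2 * h + 1) \<le> a ^ n" using n2 a2 by (intro power_increasing) auto
    have e2: "a ^ (2 * h + 1) = a * Q * Q" unfolding Q_def
      by (simp only: mult_2 power_add power_one_right) (simp add: algebra_simps)
    from e1 have an: "a * Q * Q \<le> a ^ n" unfolding e2 .
    have "(a * Q - 1) * (a * Q - a) = a * (Q - 1) * (a * Q - 1)" by (simp add: algebra_simps)
    also have "\<dots> \<le> a * (Q - 1) * (Q * Q - 1)"
      using Qa a2 by (intro mult_left_mono) (auto intro: mult_right_mono)
    also have "\<dots> = (Q - 1) * (a * Q * Q - a)" by (simp add: algebra_simps)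
    also have "\<dots> \<le> (Q - 1) * (a ^ n - a)" using an Qa a2 by (intro mult_left_mono) auto
    finally show ?thesis .
  qed
  have q1: "q \<ge> 1" using q_ge2 by simp
  have nat_ineq: "card {x\<in>C. rank_q q (er x) = h + 1} * (\<Prod>i<2. q ^ (h + 1) - q ^ i) + (q ^ h - 1) * (q ^ n - q)
          \<le> (\<Prod>i<2. q ^ n - q ^ i)" by (rule level_refined[OF x0 dh])
  have r1: "real (\<Prod>i<2. q ^ (h + 1) - q ^ i) = (\<Prod>i<2. a ^ (h + 1) - a ^ i)"
    unfolding a_def by (rule real_prod_diff[OF q1]) (use h1 in simp)
  have r2: "real (\<Prod>i<2. q ^ n - q ^ i) = (\<Prod>i<2. a ^ n - a ^ i)"
    unfolding a_def by (rule real_prod_diff[OF q1]) (use n2 h1 in simp)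
  have r3: "real (q ^ h - 1) * real (q ^ n - q) = (Q - 1) * (a ^ n - a)"
  proof -
    have "1 \<le> q ^ h" using q1 by simp
    moreover have "q \<le> q ^ n" using q1 n2 power_increasing[of 1 n q] by simp
    ultimately show ?thesis by (simp add: a_def Q_def of_nat_diff)
  qed
  have "real (card {x\<in>C. rank_q q (er x) = h + 1} * (\<Prod>i<2. q ^ (h + 1) - q ^ i) + (q ^ h - 1) * (q ^ n - q))
          \<le> real (\<Prod>i<2. q ^ n - q ^ i)" using nat_ineq by (simp only: of_nat_le_iff)
  hence h3: "?L * (\<Prod>i<2. a ^ (h + 1) - a ^ i) + (Q - 1) * (a ^ n - a) \<le> (\<Prod>i<2. a ^ n - a ^ i)"
    unfolding of_nat_add of_nat_mult r1 r2 r3 .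
  have "(?L + 1) * (\<Prod>i<2. a ^ (h + 1) - a ^ i) = ?L * (\<Prod>i<2. a ^ (h + 1) - a ^ i) + (\<Prod>i<2. a ^ (h + 1) - a ^ i)"
    by (simp add: distrib_right)
  also have "\<dots> \<le> ?L * (\<Prod>i<2. a ^ (h + 1) - a ^ i) + (Q - 1) * (a ^ n - a)" using ineq Pt by simp
  finally have main: "(?L + 1) * (\<Prod>i<2. a ^ (h + 1) - a ^ i) \<le> (\<Prod>i<2. a ^ n - a ^ i)" using h3 by simp
  have pos: "0 < (\<Prod>i<2. a ^ (h + 1) - a ^ i)" unfolding a_def using prod_pos[OF q_ge2, of 2 "h+1"] h1 by simp
  have "B (h + 1) = (\<Prod>i<2. a ^ n - a ^ i) / (\<Prod>i<2. a ^ (h + 1) - a ^ i)"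
    unfolding s2 a_def by (rule gb_ratio[OF q_ge2])
  thus ?thesis using main pos by (simp add: field_simps)
qed

end

context gcode
begin

lemma ball_bound:
  assumes hyp: "(n - k + 1 - 1) div 2 < tau" "tau < n - k + 1"
  shows "real (card (rank_ball q tau r \<inter> gabidulin q alphas k)) \<le> (\<Sum>t = (n - k + 1 - 1) div 2 + 1..tau. B t)"
proof -
  define D where "D = n - k + 1"
  define h where "h = (D - 1) div 2"
  have D1: "D \<ge> 1" unfolding D_def by simp
  have hD: "2 * h + 1 \<le> D" unfolding h_def using D1 by simp
  have ht: "h < tau" "tau < D" using hyp unfolding D_def h_def by auto
  define Lev where "Lev t = {x\<in>C. rank_q q (er x) = t}" for t
  define Cl where "Cl = {x\<in>C. rank_q q (er x) \<le> h}"
  have Bl: "rank_ball q tau r \<inter> gabidulin q alphas k = Cl \<union> (\<Union>t\<in>{h+1..tau}. Lev t)"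
  proof (intro equalityI subsetI)
    fix x assume "x \<in> rank_ball q tau r \<inter> gabidulin q alphas k"
    hence "x \<in> C" "rank_q q (er x) \<le> tau" unfolding rank_ball_def C_def er_def by auto
    thus "x \<in> Cl \<union> (\<Union>t\<in>{h+1..tau}. Lev t)" unfolding Cl_def Lev_def by auto
  next
    fix x assume "x \<in> Cl \<union> (\<Union>t\<in>{h+1..tau}. Lev t)"
    hence "x \<in> C" "rank_q q (er x) \<le> tau" unfolding Cl_def Lev_def using ht by auto
    thus "x \<in> rank_ball q tau r \<inter> gabidulin q alphas k"
      unfolding rank_ball_def C_def er_def using C_len rl C_def by auto
  qed
  have finCl: "finite Cl" unfolding Cl_def using finite_C by simp
  have finLev: "finite (Lev t)" for t unfolding Lev_def using finite_C by simp
  have card_eq: "card (rank_ball q tau r \<inter> gabidulin q alphas k) = card Cl + (\<Sum>t\<in>{h+1..tau}. card (Lev t))"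
  proof -
    have "card (Cl \<union> (\<Union>t\<in>{h+1..tau}. Lev t)) = card Cl + card (\<Union>t\<in>{h+1..tau}. Lev t)"
      by (rule card_Un_disjoint) (use finCl finLev in \<open>auto simp: Cl_def Lev_def\<close>)
    moreover have "card (\<Union>t\<in>{h+1..tau}. Lev t) = (\<Sum>t\<in>{h+1..tau}. card (Lev t))"
      by (rule card_UN_disjoint) (use finLev in \<open>auto simp: Lev_def\<close>)
    ultimately show ?thesis using Bl by simp
  qed
  have levB: "real (card (Lev t)) \<le> B t" if "t \<in> {h+1..tau}" for t
    unfolding Lev_def using that ht by (intro level_real) (auto simp: D_def h_def)
  have Cl1: "x = y" if "x \<in> Cl" "y \<in> Cl" for x y
  proof (rule ccontr)
    assume "x \<noteq> y"
    hence "D \<le> rank_q q (er x) + rank_q q (er y)" using key0 that unfolding Cl_def D_def by auto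
    thus False using that hD unfolding Cl_def by auto
  qed
  have hT: "h + 1 \<in> {h+1..tau}" using ht by simp
  have sumsplit: "(\<Sum>t\<in>{h+1..tau}. f t) = f (h + 1) + (\<Sum>t\<in>{h+1..tau} - {h+1}. f t)" for f :: "nat \<Rightarrow> real"
    using sum.remove[OF _ hT] by simp
  have restB: "(\<Sum>t\<in>{h+1..tau} - {h+1}. real (card (Lev t))) \<le> (\<Sum>t\<in>{h+1..tau} - {h+1}. B t)"
    by (rule sum_mono) (use levB in auto)
  have "real (card (rank_ball q tau r \<inter> gabidulin q alphas k)) \<le> (\<Sum>t\<in>{h+1..tau}. B t)"
  proof (cases "Cl = {}")
    case True
    hence "real (card (rank_ball q tau r \<inter> gabidulin q alphas k)) = (\<Sum>t\<in>{h+1..tau}. real (card (Lev t)))"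
      using card_eq by simp
    also have "\<dots> \<le> (\<Sum>t\<in>{h+1..tau}. B t)" by (rule sum_mono) (use levB in auto)
    finally show ?thesis .
  next
    case False
    then obtain x0 where x0: "x0 \<in> Cl" by blast
    hence Cleq: "Cl = {x0}" using Cl1 by blast
    have x0C: "x0 \<in> C" and t0h: "rank_q q (er x0) \<le> h" using x0 unfolding Cl_def by auto
    have first: "real (card (Lev (h + 1))) + 1 \<le> B (h + 1)"
    proof (cases "rank_q q (er x0) + (h + 1) < D")
      case True
      have "Lev (h + 1) = {}"
      proof (rule ccontr)
        assume "Lev (h + 1) \<noteq> {}"
        then obtain x where x: "x \<in> C" "rank_q q (er x) = h + 1" unfolding Lev_def by blast
        hence "x \<noteq> x0" using t0h by auto
        hence "D \<le> rank_q q (er x) + rank_q q (er x0)" using key0[OF x(1) x0C] unfolding D_def by simp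
        thus False using True x by simp
      qed
      moreover have "1 \<le> B (h + 1)" using ht by (intro B_ge1) (auto simp: D_def h_def)
      ultimately show ?thesis by simp
    next
      case False
      hence t0: "rank_q q (er x0) = h" and Dh: "D = 2 * h + 1" using t0h hD by auto
      have h1: "h \<ge> 1" using ht Dh by (cases h) auto
      show ?thesis unfolding Lev_def
        using refined_real[OF x0C t0 _ h1] Dh by (simp add: D_def add.commute)
    qed
    have "real (card (rank_ball q tau r \<inter> gabidulin q alphas k))
        = 1 + (real (card (Lev (h + 1))) + (\<Sum>t\<in>{h+1..tau} - {h+1}. real (card (Lev t))))"
      using card_eq Cleq sumsplit[of "\<lambda>t. real (card (Lev t))"] by simp
    also have "\<dots> \<le> B (h + 1) + (\<Sum>t\<in>{h+1..tau} - {h+1}. B t)" using first restB by simp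
    also have "\<dots> = (\<Sum>t\<in>{h+1..tau}. B t)" using sumsplit[of B] by simp
    finally show ?thesis .
  qed
  thus ?thesis unfolding h_def D_def by simp
qed

end

theorem theorem2:
  fixes alphas :: "('a::{field,finite}) list"
    and p e q m n k d \<tau> :: nat
  assumes "prime p" "e > 0" "q = p ^ e"
    and "card (UNIV :: 'a set) = q ^ m"
    and "n \<le> m"
    and "length alphas = n"
    and "q_indep q alphas {..<n}"
    and "1 \<le> k" "k \<le> n"
    and "d = n - k + 1"
    and "(d - 1) div 2 < \<tau>" "\<tau> < d"
  shows "(\<forall>r::'a list. length r = n \<longrightarrow>
            real (card (rank_ball q \<tau> r \<inter> gabidulin q alphas k))
              \<le> (\<Sum>t = (d - 1) div 2 + 1..\<tau>.
                    gauss_binom q n (2*t+1-d) / gauss_binom q t (2*t+1-d)))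
       \<and> real (Max {card (rank_ball q \<tau> r \<inter> gabidulin q alphas k) | r::'a list. length r = n})
              \<le> (\<Sum>t = (d - 1) div 2 + 1..\<tau>.
                    gauss_binom q n (2*t+1-d) / gauss_binom q t (2*t+1-d))
       \<and> (\<Sum>t = (d - 1) div 2 + 1..\<tau>.
                    gauss_binom q n (2*t+1-d) / gauss_binom q t (2*t+1-d))
              \<le> 4 * (\<Sum>t = (d - 1) div 2 + 1..\<tau>. real q ^ ((2*t+1-d) * (n-t)))
       \<and> 4 * (\<Sum>t = (d - 1) div 2 + 1..\<tau>. real q ^ ((2*t+1-d) * (n-t)))
              \<le> 4 * real (\<tau> - (d - 1) div 2) * real q ^ ((2*\<tau>+1-d) * (n - (d - 1) div 2 - 1))"
proof -
  interpret gs: gset p e q m "subfield_q q :: 'a set"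
    by unfold_locales (use assms in auto)
  let ?S = "(\<Sum>t = (d - 1) div 2 + 1..\<tau>. gauss_binom q n (2*t+1-d) / gauss_binom q t (2*t+1-d))"
  have c1: "real (card (rank_ball q \<tau> r \<inter> gabidulin q alphas k)) \<le> ?S" if rl: "length r = n" for r :: "'a list"
  proof -
    interpret gc: gcode p e q m "subfield_q q :: 'a set" alphas n k r
      by unfold_locales (use assms rl in auto)
    show ?thesis using gc.ball_bound[of \<tau>] assms by simp
  qed
  have finG: "finite (gabidulin q alphas k)"
  proof -
    interpret gc: gcode p e q m "subfield_q q :: 'a set" alphas n k "replicate n 0"
      by unfold_locales (use assms in auto)
    show ?thesis using gc.finite_C unfolding gc.C_def .
  qed
  let ?M = "{card (rank_ball q \<tau> r \<inter> gabidulin q alphas k) | r::'a list. length r = n}"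
  have "?M \<subseteq> {..card (gabidulin q alphas k)}"
    using finG by (auto intro: card_mono)
  hence finM: "finite ?M" using finite_subset by blast
  have "card (rank_ball q \<tau> (replicate n 0) \<inter> gabidulin q alphas k) \<in> ?M" by auto
  hence "Max ?M \<in> ?M" using finM Max_in by blast
  then obtain r0 :: "'a list" where r0: "length r0 = n" "Max ?M = card (rank_ball q \<tau> r0 \<inter> gabidulin q alphas k)"
    by (auto simp only: mem_Collect_eq)
  have c2: "real (Max ?M) \<le> ?S" using c1[OF r0(1)] r0(2) by simp
  have q2: "q \<ge> 2" using gs.q_ge2 .
  have c3: "?S \<le> 4 * (\<Sum>t = (d - 1) div 2 + 1..\<tau>. real q ^ ((2*t+1-d) * (n-t)))"
  proof -
    have "?S \<le> (\<Sum>t = (d - 1) div 2 + 1..\<tau>. 4 * real q ^ ((2*t+1-d) * (n-t)))"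
    proof (rule sum_mono)
      fix t assume t: "t \<in> {(d - 1) div 2 + 1..\<tau>}"
      show "gauss_binom q n (2*t+1-d) / gauss_binom q t (2*t+1-d) \<le> 4 * real q ^ ((2*t+1-d) * (n-t))"
        by (rule ratio_bound[OF q2]) (use t assms in auto)
    qed
    thus ?thesis by (simp add: sum_distrib_left)
  qed
  have c4: "(\<Sum>t = (d - 1) div 2 + 1..\<tau>. real q ^ ((2*t+1-d) * (n-t)))
      \<le> real (\<tau> - (d - 1) div 2) * real q ^ ((2*\<tau>+1-d) * (n - (d - 1) div 2 - 1))"
  proof -
    have "(\<Sum>t = (d - 1) div 2 + 1..\<tau>. real q ^ ((2*t+1-d) * (n-t)))
        \<le> of_nat (card {(d - 1) div 2 + 1..\<tau>}) * real q ^ ((2*\<tau>+1-d) * (n - (d - 1) div 2 - 1))"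
    proof (rule sum_bounded_above)
      fix t assume t: "t \<in> {(d - 1) div 2 + 1..\<tau>}"
      have "(2*t+1-d) * (n-t) \<le> (2*\<tau>+1-d) * (n - (d - 1) div 2 - 1)"
        using t by (intro mult_le_mono) auto
      thus "real q ^ ((2*t+1-d) * (n-t)) \<le> real q ^ ((2*\<tau>+1-d) * (n - (d - 1) div 2 - 1))"
        using q2 by (intro power_increasing) auto
    qed
    moreover have "card {(d - 1) div 2 + 1..\<tau>} = \<tau> - (d - 1) div 2" by simp
    ultimately show ?thesis by simp
  qed
  show ?thesis using c1 c2 c3 c4 by auto
qed


end
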